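(* Let $p$ be an odd prime and $G$ the non-abelian group of order $p^3$ and exponent $p$. Let $W$ be a sequence over $G$ of length $p^3+3p-3$. Then: (i) $W$ has a subsequence of length $p^3$ with central product; (ii) if at least $p^3+p-1$ terms of $W$ (counted with multiplicity) lie in $Z(G)$, then $W$ has a product-one subsequence of length $p^3$; (iii) if at least $p^3+2p-2$ terms of $W$ (counted with multiplicity) lie in some maximal subgroup of $G$, then $W$ has a product-one subsequence of length $p^3$.
   Context: $G = \langle x, y : x^p = y^p = 1,\ [y,x] \text{ central}\rangle$ is the Heisenberg group of order $p^3$ and exponent $p$, with $Z(G)=[G,G]$ of order $p$. A sequence over $G$ is a finite unordered list (multiset) of elements of $G$; a subsequence is a sub-multiset. A sequence $g_1\cdot\dotsc\cdot g_\ell$ has central product if $g_1\cdots g_\ell\in Z(G)$ (independent of ordering). A non-empty sequence is product-one if some ordering of its terms has product $1$. *)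

theory Defs
  imports "HOL-Algebra.Algebra" "HOL-Library.Multiset"
begin

definition list_prod :: "('a, 'b) monoid_scheme \<Rightarrow> 'a list \<Rightarrow> 'a" where
  "list_prod G xs = foldr (\<lambda>x y. x \<otimes>\<^bsub>G\<^esub> y) xs \<one>\<^bsub>G\<^esub>"

definition grp_center :: "('a, 'b) monoid_scheme \<Rightarrow> 'a set" where
  "grp_center G = {z \<in> carrier G. \<forall>x \<in> carrier G. z \<otimes>\<^bsub>G\<^esub> x = x \<otimes>\<^bsub>G\<^esub> z}"

text \<open>Sequences over G are multisets of elements of the carrier.\<close>
definition has_central_product :: "('a, 'b) monoid_scheme \<Rightarrow> 'a multiset \<Rightarrow> bool" where
  "has_central_product G S \<longleftrightarrow> (\<exists>xs. mset xs = S \<and> list_prod G xs \<in> grp_center G)"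

definition product_one :: "('a, 'b) monoid_scheme \<Rightarrow> 'a multiset \<Rightarrow> bool" where
  "product_one G S \<longleftrightarrow> S \<noteq> {#} \<and> (\<exists>xs. mset xs = S \<and> list_prod G xs = \<one>\<^bsub>G\<^esub>)"

definition maximal_subgroup :: "'a set \<Rightarrow> ('a, 'b) monoid_scheme \<Rightarrow> bool" where
  "maximal_subgroup H G \<longleftrightarrow> subgroup H G \<and> H \<noteq> carrier G \<and>
     (\<forall>K. subgroup K G \<and> H \<subseteq> K \<longrightarrow> K = H \<or> K = carrier G)"

definition terms_in :: "'a multiset \<Rightarrow> 'a set \<Rightarrow> nat" where
  "terms_in S A = size (filter_mset (\<lambda>x. x \<in> A) S)"

end

theory Submission
  imports Defs "HOL-Number_Theory.Number_Theory"
begin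

fun ld :: "nat \<Rightarrow> (nat \<Rightarrow> int) \<Rightarrow> bool" where
  "ld 0 f = (\<forall>x. f x = 0)"
| "ld (Suc n) f = ld n (\<lambda>x. f (Suc x) - f x)"

lemma ld_zero: "(\<forall>x. f x = 0) \<Longrightarrow> ld n f"
  by (induction n arbitrary: f) auto

lemma ld_add: "ld n f \<Longrightarrow> ld n g \<Longrightarrow> ld n (\<lambda>x. f x + g x)"
proof (induction n arbitrary: f g)
  case 0 then show ?case by auto
next
  case (Suc n)
  have "ld n (\<lambda>x. (f (Suc x) - f x) + (g (Suc x) - g x))"
    using Suc by auto
  moreover have "(\<lambda>x. (f (Suc x) - f x) + (g (Suc x) - g x)) = (\<lambda>x. (f (Suc x) + g (Suc x)) - (f x + g x))"
    by auto
  ultimately show ?case by simp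
qed

lemma ld_cmult: "ld n f \<Longrightarrow> ld n (\<lambda>x. c * f x)"
proof (induction n arbitrary: f)
  case 0 then show ?case by auto
next
  case (Suc n)
  have "ld n (\<lambda>x. c * (f (Suc x) - f x))"
    using Suc by auto
  moreover have "(\<lambda>x. c * (f (Suc x) - f x)) = (\<lambda>x. c * f (Suc x) - c * f x)"
    by (auto simp: algebra_simps)
  ultimately show ?case by simp
qed

lemma ld_shift: "ld n f \<Longrightarrow> ld n (\<lambda>x. f (x + s))"
proof (induction n arbitrary: f)
  case 0 then show ?case by auto
next
  case (Suc n)
  then have "ld n (\<lambda>x. f (Suc (x + s)) - f (x + s))" by auto
  then show ?case by simp
qed

lemma ld_Suc: "ld n f \<Longrightarrow> ld (Suc n) f"
proof (induction n arbitrary: f)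
  case 0 then show ?case by auto
next
  case (Suc n)
  from Suc.prems have "ld n (\<lambda>x. f (Suc x) - f x)" by (simp only: ld.simps)
  hence "ld (Suc n) (\<lambda>x. f (Suc x) - f x)" by (rule Suc.IH)
  thus ?case by (simp only: ld.simps)
qed

lemma ld_mono: "ld n f \<Longrightarrow> n \<le> m \<Longrightarrow> ld m f"
proof -
  assume a: "ld n f" "n \<le> m"
  from a(2) show ?thesis
  proof (induction m rule: dec_induct)
    case base then show ?case using a(1) .
  next
    case (step k) then show ?case using ld_Suc by blast
  qed
qed

lemma ld_sum: "finite I \<Longrightarrow> (\<forall>i\<in>I. ld n (F i)) \<Longrightarrow> ld n (\<lambda>x. \<Sum>i\<in>I. F i x)"
proof (induction I rule: finite_induct)
  case empty then show ?case by (auto intro: ld_zero)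
next
  case (insert a I)
  then show ?case by (simp add: ld_add)
qed

lemma ld_diff: "ld (Suc n) f \<Longrightarrow> ld n (\<lambda>x. f (x + s) - f x)"
proof -
  assume h: "ld (Suc n) f"
  have eq: "f (x + s) - f x = (\<Sum>i\<in>{..<s}. f (Suc (x + i)) - f (x + i))" for x
    by (induction s) auto
  have "ld n (\<lambda>x. \<Sum>i\<in>{..<s}. f (Suc (x + i)) - f (x + i))"
  proof (rule ld_sum)
    show "\<forall>i\<in>{..<s}. ld n (\<lambda>x. f (Suc (x + i)) - f (x + i))"
      using ld_shift[of n "\<lambda>x. f (Suc x) - f x"] h by simp
  qed simp
  then show ?thesis by (simp add: eq)
qed

lemma ld_pow: "ld (Suc k) (\<lambda>x. int x ^ k)"
proof (induction k rule: less_induct)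
  case (less k)
  have eq: "int (Suc x) ^ k - int x ^ k = (\<Sum>i\<in>{..<k}. of_nat (k choose i) * int x ^ i)" for x
  proof -
    have "int (Suc x) ^ k = (int x + 1) ^ k" by (simp add: add.commute)
    also have "\<dots> = (\<Sum>i\<le>k. of_nat (k choose i) * int x ^ i * 1 ^ (k - i))"
      by (rule binomial_ring)
    also have "\<dots> = (\<Sum>i\<le>k. of_nat (k choose i) * int x ^ i)" by simp
    also have "\<dots> = (\<Sum>i<k. of_nat (k choose i) * int x ^ i) + int x ^ k"
      by (simp add: lessThan_Suc_atMost[symmetric])
    finally show ?thesis by simp
  qed
  have "ld k (\<lambda>x. \<Sum>i\<in>{..<k}. of_nat (k choose i) * int x ^ i)"
  proof (rule ld_sum)
    show "\<forall>i\<in>{..<k}. ld k (\<lambda>x. of_nat (k choose i) * int x ^ i)"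
    proof
      fix i assume "i \<in> {..<k}"
      then have "i < k" by simp
      then have "ld (Suc i) (\<lambda>x. int x ^ i)" using less by blast
      then have "ld (Suc i) (\<lambda>x. of_nat (k choose i) * int x ^ i)" by (rule ld_cmult)
      then show "ld k (\<lambda>x. of_nat (k choose i) * int x ^ i)"
        by (rule ld_mono) (use \<open>i < k\<close> in simp)
    qed
  qed simp
  moreover have "(\<lambda>x. \<Sum>i\<in>{..<k}. of_nat (k choose i) * int x ^ i) = (\<lambda>x. int (Suc x) ^ k - int x ^ k)"
    using eq by auto
  ultimately show ?case by (simp only: ld.simps)
qed

definition Q :: "nat \<Rightarrow> nat \<Rightarrow> int" where
  "Q k c = (if c = 0 then (-1) ^ k else int ((c - 1) choose k))"

lemma Q_diff: "Q (Suc k) (Suc c) - Q (Suc k) c = Q k c"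
  by (cases c) (auto simp: Q_def)

lemma ld_Q: "ld (Suc k) (Q k)"
proof (induction k)
  case 0
  have "Q 0 = (\<lambda>x. 1)" by (auto simp: Q_def)
  then show ?case by simp
next
  case (Suc k)
  have "(\<lambda>x. Q (Suc k) (Suc x) - Q (Suc k) x) = Q k" by (auto simp: Q_diff)
  then show ?case using Suc by simp
qed

fun td :: "nat \<Rightarrow> (nat \<Rightarrow> nat \<Rightarrow> nat \<Rightarrow> int) \<Rightarrow> bool" where
  "td 0 F = (\<forall>a b c. F a b c = 0)"
| "td (Suc n) F = (\<forall>\<alpha> \<beta>. td n (\<lambda>a b c. F (a + \<alpha>) (b + \<beta>) (Suc c) - F a b c))"

lemma td_zero: "(\<forall>a b c. F a b c = 0) \<Longrightarrow> td n F"
  by (induction n arbitrary: F) auto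

lemma td_add: "td n F \<Longrightarrow> td n G \<Longrightarrow> td n (\<lambda>a b c. F a b c + G a b c)"
proof (induction n arbitrary: F G)
  case 0 then show ?case by auto
next
  case (Suc n)
  show ?case
  proof (simp only: td.simps, intro allI)
    fix \<alpha> \<beta>
    have "td n (\<lambda>a b c. (F (a + \<alpha>) (b + \<beta>) (Suc c) - F a b c) + (G (a + \<alpha>) (b + \<beta>) (Suc c) - G a b c))"
      using Suc by auto
    moreover have "(\<lambda>a b c. (F (a + \<alpha>) (b + \<beta>) (Suc c) - F a b c) + (G (a + \<alpha>) (b + \<beta>) (Suc c) - G a b c))
       = (\<lambda>a b c. (F (a + \<alpha>) (b + \<beta>) (Suc c) + G (a + \<alpha>) (b + \<beta>) (Suc c)) - (F a b c + G a b c))"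
      by (auto simp: algebra_simps)
    ultimately show "td n (\<lambda>a b c. (F (a + \<alpha>) (b + \<beta>) (Suc c) + G (a + \<alpha>) (b + \<beta>) (Suc c)) - (F a b c + G a b c))"
      by simp
  qed
qed

lemma ld_0_zero: "ld 0 f \<Longrightarrow> f x = 0" by simp

lemma td_prod:
  "ld i f \<Longrightarrow> ld j g \<Longrightarrow> ld k h \<Longrightarrow> i + j + k \<le> m + 2 \<Longrightarrow> td m (\<lambda>a b c. f a * g b * h c)"
proof (induction m arbitrary: i j k f g h)
  case 0
  then have "i = 0 \<or> j = 0 \<or> k = 0" by auto
  then have "\<forall>a b c. f a * g b * h c = 0" using 0 by auto
  then show ?case by (rule td_zero)
next
  case (Suc m)
  show ?case
  proof (cases "i = 0 \<or> j = 0 \<or> k = 0")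
    case True
    then have "\<forall>a b c. f a * g b * h c = 0" using Suc.prems by auto
    then show ?thesis by (rule td_zero)
  next
    case False
    then obtain i' j' k' where ijk: "i = Suc i'" "j = Suc j'" "k = Suc k'"
      by (metis not0_implies_Suc)
    show ?thesis
    proof (simp only: td.simps, intro allI)
      fix \<alpha> \<beta>
      let ?f = "\<lambda>a. f (a + \<alpha>) - f a"
      let ?g = "\<lambda>b. g (b + \<beta>) - g b"
      let ?h = "\<lambda>c. h (Suc c) - h c"
      have lf: "ld i' ?f" using Suc.prems(1) ijk ld_diff by blast
      have lg: "ld j' ?g" using Suc.prems(2) ijk ld_diff by blast
      have lh: "ld k' ?h" using Suc.prems(3) ijk by simp
      have lg2: "ld j (\<lambda>b. g (b + \<beta>))" using Suc.prems(2) ld_shift by blast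
      have lh2: "ld k (\<lambda>c. h (c + 1))" using Suc.prems(3) ld_shift by blast
      have t1: "td m (\<lambda>a b c. ?f a * g (b + \<beta>) * h (c + 1))"
        by (rule Suc.IH[OF lf lg2 lh2]) (use Suc.prems ijk in simp)
      have t2: "td m (\<lambda>a b c. f a * ?g b * h (c + 1))"
        by (rule Suc.IH[OF Suc.prems(1) lg lh2]) (use Suc.prems ijk in simp)
      have t3: "td m (\<lambda>a b c. f a * g b * ?h c)"
        by (rule Suc.IH[OF Suc.prems(1) Suc.prems(2) lh]) (use Suc.prems ijk in simp)
      have "td m (\<lambda>a b c. ?f a * g (b + \<beta>) * h (c + 1) + f a * ?g b * h (c + 1) + f a * g b * ?h c)"
        by (rule td_add[OF td_add[OF t1 t2] t3])
      moreover have "(\<lambda>a b c. ?f a * g (b + \<beta>) * h (c + 1) + f a * ?g b * h (c + 1) + f a * g b * ?h c)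
        = (\<lambda>a b c. f (a + \<alpha>) * g (b + \<beta>) * h (Suc c) - f a * g b * h c)"
        by (auto simp: algebra_simps)
      ultimately show "td m (\<lambda>a b c. f (a + \<alpha>) * g (b + \<beta>) * h (Suc c) - f a * g b * h c)"
        by simp
    qed
  qed
qed

fun itd :: "('x \<Rightarrow> nat) \<Rightarrow> ('x \<Rightarrow> nat) \<Rightarrow> 'x list \<Rightarrow> (nat \<Rightarrow> nat \<Rightarrow> nat \<Rightarrow> int) \<Rightarrow> (nat \<Rightarrow> nat \<Rightarrow> nat \<Rightarrow> int)" where
  "itd f g [] F = F"
| "itd f g (x # xs) F = itd f g xs (\<lambda>a b c. F (a + f x) (b + g x) (Suc c) - F a b c)"

lemma itd_zero: "(\<forall>a b c. F a b c = 0) \<Longrightarrow> itd f g xs F a b c = 0"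
  by (induction xs arbitrary: F) auto

lemma itd_td: "td n F \<Longrightarrow> n \<le> length xs \<Longrightarrow> itd f g xs F a b c = 0"
proof (induction xs arbitrary: n F)
  case Nil then show ?case by auto
next
  case (Cons x xs)
  show ?case
  proof (cases n)
    case 0
    then show ?thesis using Cons.prems by (intro itd_zero) simp
  next
    case (Suc n')
    then have "td n' (\<lambda>a b c. F (a + f x) (b + g x) (Suc c) - F a b c)" using Cons.prems by simp
    moreover have "n' \<le> length xs" using Cons.prems Suc by simp
    ultimately show ?thesis using Cons.IH by simp
  qed
qed

lemma sl_diff: "(\<Sum>z\<leftarrow>L. (u z - v z :: int)) = (\<Sum>z\<leftarrow>L. u z) - (\<Sum>z\<leftarrow>L. v z)"
  by (induction L) auto

lemma sl_neg: "(\<Sum>z\<leftarrow>L. - (u z :: int)) = - (\<Sum>z\<leftarrow>L. u z)"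
  by (induction L) auto

lemma itd_expand:
  "itd f g xs F a b c = (-1) ^ length xs *
     (\<Sum>zs\<leftarrow>subseqs xs. (-1) ^ length zs * F (a + sum_list (map f zs)) (b + sum_list (map g zs)) (c + length zs))"
proof (induction xs arbitrary: F a b c)
  case Nil then show ?case by simp
next
  case (Cons x xs)
  let ?T = "\<lambda>F zs. (-1::int) ^ length zs * F (a + sum_list (map f zs)) (b + sum_list (map g zs)) (c + length zs)"
  have "itd f g (x # xs) F a b c = (-1) ^ length xs *
     (\<Sum>zs\<leftarrow>subseqs xs. ?T (\<lambda>a b c. F (a + f x) (b + g x) (Suc c) - F a b c) zs)"
    using Cons.IH by simp
  also have "(\<Sum>zs\<leftarrow>subseqs xs. ?T (\<lambda>a b c. F (a + f x) (b + g x) (Suc c) - F a b c) zs)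
     = (\<Sum>zs\<leftarrow>subseqs xs. - ?T F (x # zs) - ?T F zs)"
    by (rule arg_cong[where f=sum_list], rule map_cong) (auto simp: algebra_simps)
  also have "\<dots> = - ((\<Sum>zs\<leftarrow>subseqs xs. ?T F (x # zs)) + (\<Sum>zs\<leftarrow>subseqs xs. ?T F zs))"
    by (simp only: sl_diff sl_neg)
  also have "(\<Sum>zs\<leftarrow>subseqs xs. ?T F (x # zs)) + (\<Sum>zs\<leftarrow>subseqs xs. ?T F zs)
      = (\<Sum>zs\<leftarrow>subseqs (x # xs). ?T F zs)"
    by (simp add: Let_def o_def)
  finally show ?case by simp
qed

lemma vanish:
  assumes "ld (Suc i) A" "ld (Suc j) B" "ld (Suc k) C" "Suc (i + j + k) \<le> length xs"
  shows "(\<Sum>zs\<leftarrow>subseqs xs. (-1) ^ length zs * (A (sum_list (map f zs)) * B (sum_list (map g zs)) * C (length zs))) = 0"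
proof -
  have "td (Suc (i + j + k)) (\<lambda>a b c. A a * B b * C c)"
    by (rule td_prod[OF assms(1-3)]) simp
  then have "itd f g xs (\<lambda>a b c. A a * B b * C c) 0 0 0 = 0"
    using itd_td assms(4) by blast
  then show ?thesis by (simp add: itd_expand)
qed

lemma prime_dvd_choose_pow:
  assumes p: "Factorial_Ring.prime (p::nat)" and k: "0 < k" "k < p ^ n"
  shows "p dvd (p ^ n choose k)"
proof (rule ccontr)
  assume nd: "\<not> p dvd (p ^ n choose k)"
  have "k * (p ^ n choose k) = p ^ n * (p ^ n - 1 choose (k - 1))"
    using times_binomial_minus1_eq k by auto
  hence "p ^ n dvd k * (p ^ n choose k)" by simp
  moreover have "coprime (p ^ n) (p ^ n choose k)"
    using p nd by (simp add: prime_imp_coprime)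
  ultimately have "p ^ n dvd k" using coprime_dvd_mult_left_iff by blast
  then show False using k dvd_imp_le by fastforce
qed

lemma Q_dvd:
  assumes p: "Factorial_Ring.prime (p::nat)" and c: "1 \<le> c" "c \<noteq> p ^ n" "c < 2 * p ^ n"
  shows "int p dvd Q (p ^ n - 1) c"
proof -
  have pn: "p ^ n \<ge> 1" using p by (simp add: prime_gt_0_nat one_le_power Suc_leI)
  show ?thesis
  proof (cases "c - 1 < p ^ n - 1")
    case True
    then show ?thesis using c by (simp add: Q_def binomial_eq_0)
  next
    case False
    then have ge: "c - 1 \<ge> p ^ n" using c pn by auto
    define r where "r = c - 1 - p ^ n"
    have r: "r < p ^ n - 1" "c - 1 = p ^ n + r" using ge c unfolding r_def by auto
    have "(p ^ n + r) choose (p ^ n - 1) = (\<Sum>k\<le>p ^ n - 1. (p ^ n choose k) * (r choose (p ^ n - 1 - k)))"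
      by (rule vandermonde[symmetric])
    moreover have "p dvd (\<Sum>k\<le>p ^ n - 1. (p ^ n choose k) * (r choose (p ^ n - 1 - k)))"
    proof (rule dvd_sum)
      fix k assume "k \<in> {..p ^ n - 1}"
      then have kk: "k \<le> p ^ n - 1" by simp
      show "p dvd (p ^ n choose k) * (r choose (p ^ n - 1 - k))"
      proof (cases "k = 0")
        case True then show ?thesis using r by (simp add: binomial_eq_0)
      next
        case False
        then have "p dvd (p ^ n choose k)" using prime_dvd_choose_pow[OF p] kk pn by auto
        then show ?thesis by simp
      qed
    qed
    ultimately have "p dvd ((c - 1) choose (p ^ n - 1))" using r by simp
    then show ?thesis using c by (simp add: Q_def)
  qed
qed

lemma A_dvd:
  assumes p: "Factorial_Ring.prime (p::nat)" and a: "\<not> p dvd a"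
  shows "int p dvd (1 - int a ^ (p - 1))"
proof -
  have "[a ^ (p - 1) = 1] (mod p)" using fermat_theorem[OF p a] .
  then have "[int a ^ (p - 1) = 1] (mod int p)"
    by (metis cong_int_iff of_nat_1 of_nat_power)
  then have "int p dvd (int a ^ (p - 1) - 1)" by (simp add: cong_iff_dvd_diff)
  then show ?thesis by (metis dvd_minus_iff minus_diff_eq)
qed

lemma sl_split: "(\<Sum>zs\<leftarrow>subseqs xs. (u zs :: int)) = u [] + (\<Sum>zs\<leftarrow>filter (\<lambda>zs. zs \<noteq> []) (subseqs xs). u zs)"
proof (induction xs)
  case Nil then show ?case by simp
next
  case (Cons x xs)
  have "filter (\<lambda>zs. zs \<noteq> []) (map ((#) x) (subseqs xs)) = map ((#) x) (subseqs xs)"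
    by (induction "subseqs xs") auto
  then show ?case using Cons by (simp add: Let_def)
qed

lemma sl_dvd: "(\<forall>z\<in>set L. (m::int) dvd u z) \<Longrightarrow> m dvd (\<Sum>z\<leftarrow>L. u z)"
  by (induction L) auto

lemma extract_good:
  assumes hsum: "(\<Sum>zs\<leftarrow>subseqs xs. u zs) = (0::int)"
    and u0: "\<not> m dvd u []"
    and hoth: "\<And>zs. zs \<in> set (subseqs xs) \<Longrightarrow> zs \<noteq> [] \<Longrightarrow> \<not> good zs \<Longrightarrow> m dvd u zs"
  shows "\<exists>zs\<in>set (subseqs xs). zs \<noteq> [] \<and> good zs"
proof (rule ccontr)
  assume "\<not> ?thesis"
  then have "m dvd (\<Sum>zs\<leftarrow>filter (\<lambda>zs. zs \<noteq> []) (subseqs xs). u zs)"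
    using hoth by (intro sl_dvd) auto
  then have "m dvd u []" using hsum sl_split[of u xs]
    by (metis add.commute add.right_neutral dvd_add_right_iff dvd_0_right)
  then show False using u0 by simp
qed

lemma subseqs_length: "zs \<in> set (subseqs xs) \<Longrightarrow> length zs \<le> length xs"
  by (induction xs arbitrary: zs) (auto simp: Let_def, fastforce)

lemma subseqs_mset: "zs \<in> set (subseqs xs) \<Longrightarrow> mset zs \<subseteq># mset xs"
proof (induction xs arbitrary: zs)
  case Nil then show ?case by simp
next
  case (Cons x xs)
  then show ?case
  proof -
    have s: "mset xs \<subseteq># add_mset x (mset xs)"
      by (metis (no_types) add_mset_add_single mset_subset_eq_add_left)
    show ?case using Cons subset_mset.order_trans[OF _ s] by (auto simp: Let_def)
  qed
qed

lemma neg1_pow_ndvd: "(p::nat) \<ge> 2 \<Longrightarrow> \<not> int p dvd (-1) ^ n"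
proof
  assume p: "p \<ge> 2" and d: "int p dvd (-1) ^ n"
  have "(-1::int) ^ n = 1 \<or> (-1::int) ^ n = -1" by (cases "even n") auto
  then have "int p dvd 1" using d by auto
  then show False using p by simp
qed

lemma key2:
  assumes p: "Factorial_Ring.prime (p::nat)" and len: "length xs = p ^ 3 + 2 * p - 2"
  shows "\<exists>zs\<in>set (subseqs xs). length zs = p ^ 3 \<and> p dvd sum_list (map f zs) \<and> p dvd sum_list (map g zs)"
proof -
  have p2: "p \<ge> 2" using p prime_ge_2_nat by blast
  define A where "A = (\<lambda>a::nat. 1 - int a ^ (p - 1))"
  have lA: "ld (Suc (p - 1)) A"
  proof -
    have "ld (Suc (p - 1)) (\<lambda>x. int x ^ (p - 1))" by (rule ld_pow)
    then have "ld (Suc (p - 1)) (\<lambda>x. (-1) * int x ^ (p - 1))" by (rule ld_cmult)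
    moreover have "ld (Suc (p - 1)) (\<lambda>x. 1)" by (rule ld_mono[of 1]) auto
    ultimately have "ld (Suc (p - 1)) (\<lambda>x. 1 + (-1) * int x ^ (p - 1))" by (rule ld_add[rotated])
    then show ?thesis by (simp add: A_def)
  qed
  have lQ: "ld (Suc (p ^ 3 - 1)) (Q (p ^ 3 - 1))" by (rule ld_Q)
  have p3: "p ^ 3 \<ge> 8" using p2 power_mono[of 2 p 3] by auto
  have "2 * 2 * p \<le> p * p * p" using mult_le_mono[OF mult_le_mono[OF p2 p2] order_refl[of p]] .
  then have p4: "4 * p \<le> p ^ 3" by (simp add: power3_eq_cube)
  have "Suc ((p - 1) + (p - 1) + (p ^ 3 - 1)) \<le> length xs" using len p2 p3 by auto
  then have V: "(\<Sum>zs\<leftarrow>subseqs xs. (-1) ^ length zs * (A (sum_list (map f zs)) * A (sum_list (map g zs)) * Q (p ^ 3 - 1) (length zs))) = 0"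
    by (rule vanish[OF lA lA lQ])
  have "\<exists>zs\<in>set (subseqs xs). zs \<noteq> [] \<and> (length zs = p ^ 3 \<and> p dvd sum_list (map f zs) \<and> p dvd sum_list (map g zs))"
  proof (rule extract_good[OF V])
    show "\<not> int p dvd (-1) ^ length [] * (A (sum_list (map f [])) * A (sum_list (map g [])) * Q (p ^ 3 - 1) (length []))"
      using p2 neg1_pow_ndvd by (auto simp: A_def Q_def zero_power)
  next
    fix zs assume zs: "zs \<in> set (subseqs xs)" "zs \<noteq> []"
      and ng: "\<not> (length zs = p ^ 3 \<and> p dvd sum_list (map f zs) \<and> p dvd sum_list (map g zs))"
    have "int p dvd A (sum_list (map f zs)) * A (sum_list (map g zs)) * Q (p ^ 3 - 1) (length zs)"
    proof (cases "p dvd sum_list (map f zs)")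
      case False
      then show ?thesis using A_dvd[OF p] unfolding A_def by simp
    next
      case T1: True
      show ?thesis
      proof (cases "p dvd sum_list (map g zs)")
        case False
        then show ?thesis using A_dvd[OF p] unfolding A_def by simp
      next
        case True
        then have "length zs \<noteq> p ^ 3" using ng T1 by auto
        moreover have "1 \<le> length zs" using zs(2) by (simp add: Suc_le_eq)
        moreover have "length zs < 2 * p ^ 3" using subseqs_length[OF zs(1)] len p2 p3 p4 by auto
        ultimately have "int p dvd Q (p ^ 3 - 1) (length zs)" by (intro Q_dvd[OF p]) auto
        then show ?thesis by simp
      qed
    qed
    then show "int p dvd (-1) ^ length zs * (A (sum_list (map f zs)) * A (sum_list (map g zs)) * Q (p ^ 3 - 1) (length zs))"
      by simp
  qed
  then show ?thesis by blast
qed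

lemma key1:
  assumes p: "Factorial_Ring.prime (p::nat)" and len: "length xs = p ^ 3 + p - 1"
  shows "\<exists>zs\<in>set (subseqs xs). length zs = p ^ 3 \<and> p dvd sum_list (map f zs)"
proof -
  have p2: "p \<ge> 2" using p prime_ge_2_nat by blast
  define A where "A = (\<lambda>a::nat. 1 - int a ^ (p - 1))"
  have lA: "ld (Suc (p - 1)) A"
  proof -
    have "ld (Suc (p - 1)) (\<lambda>x. int x ^ (p - 1))" by (rule ld_pow)
    then have "ld (Suc (p - 1)) (\<lambda>x. (-1) * int x ^ (p - 1))" by (rule ld_cmult)
    moreover have "ld (Suc (p - 1)) (\<lambda>x. 1)" by (rule ld_mono[of 1]) auto
    ultimately have "ld (Suc (p - 1)) (\<lambda>x. 1 + (-1) * int x ^ (p - 1))" by (rule ld_add[rotated])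
    then show ?thesis by (simp add: A_def)
  qed
  have l1: "ld (Suc 0) (\<lambda>x. 1)" by simp
  have lQ: "ld (Suc (p ^ 3 - 1)) (Q (p ^ 3 - 1))" by (rule ld_Q)
  have p3: "p ^ 3 \<ge> 8" using p2 power_mono[of 2 p 3] by auto
  have "2 * 2 * p \<le> p * p * p" using mult_le_mono[OF mult_le_mono[OF p2 p2] order_refl[of p]] .
  then have p4: "4 * p \<le> p ^ 3" by (simp add: power3_eq_cube)
  have "Suc ((p - 1) + 0 + (p ^ 3 - 1)) \<le> length xs" using len p2 p3 by auto
  then have V: "(\<Sum>zs\<leftarrow>subseqs xs. (-1) ^ length zs * (A (sum_list (map f zs)) * (\<lambda>x. 1) (sum_list (map f zs)) * Q (p ^ 3 - 1) (length zs))) = 0"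
    by (rule vanish[OF lA l1 lQ])
  have "\<exists>zs\<in>set (subseqs xs). zs \<noteq> [] \<and> (length zs = p ^ 3 \<and> p dvd sum_list (map f zs))"
  proof (rule extract_good[OF V])
    show "\<not> int p dvd (-1) ^ length [] * (A (sum_list (map f [])) * (\<lambda>x. 1) (sum_list (map f [])) * Q (p ^ 3 - 1) (length []))"
      using p2 neg1_pow_ndvd by (auto simp: A_def Q_def zero_power)
  next
    fix zs assume zs: "zs \<in> set (subseqs xs)" "zs \<noteq> []"
      and ng: "\<not> (length zs = p ^ 3 \<and> p dvd sum_list (map f zs))"
    have "int p dvd A (sum_list (map f zs)) * Q (p ^ 3 - 1) (length zs)"
    proof (cases "p dvd sum_list (map f zs)")
      case False
      then show ?thesis using A_dvd[OF p] unfolding A_def by simp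
    next
      case True
      then have "length zs \<noteq> p ^ 3" using ng by auto
      moreover have "1 \<le> length zs" using zs(2) by (simp add: Suc_le_eq)
      moreover have "length zs < 2 * p ^ 3" using subseqs_length[OF zs(1)] len p2 p3 p4 by auto
      ultimately have "int p dvd Q (p ^ 3 - 1) (length zs)" by (intro Q_dvd[OF p]) auto
      then show ?thesis by simp
    qed
    then show "int p dvd (-1) ^ length zs * (A (sum_list (map f zs)) * (\<lambda>x. 1) (sum_list (map f zs)) * Q (p ^ 3 - 1) (length zs))"
      by simp
  qed
  then show ?thesis by blast
qed


locale heis = group G for G (structure) +
  fixes p :: nat
  assumes prime_p: "Factorial_Ring.prime p" and fin: "finite (carrier G)" and ordG: "order G = p ^ 3"
    and expo: "\<forall>x\<in>carrier G. x [^] p = \<one>" and noncomm: "\<not> comm_group G"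
begin

abbreviation "Z \<equiv> grp_center G"

definition Cz :: "'a \<Rightarrow> 'a set" where
  "Cz a = {x \<in> carrier G. x \<otimes> a = a \<otimes> x}"

lemma p2: "p \<ge> 2" using prime_p prime_ge_2_nat by blast

lemma pow_p: "x \<in> carrier G \<Longrightarrow> x [^] (int p * q) = \<one>"
proof -
  assume x: "x \<in> carrier G"
  have "x [^] (int p * q) = (x [^] int p) [^] q" by (simp add: int_pow_pow x)
  also have "x [^] int p = \<one>" using expo x by (simp add: int_pow_int)
  finally show ?thesis by simp
qed

lemma pow_mod: "x \<in> carrier G \<Longrightarrow> x [^] (k::int) = x [^] (k mod int p)"
proof -
  assume x: "x \<in> carrier G"
  have "k = int p * (k div int p) + k mod int p" by simp
  then have "x [^] k = x [^] (int p * (k div int p)) \<otimes> x [^] (k mod int p)"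
    by (metis int_pow_mult x)
  then show ?thesis using pow_p[OF x] x by simp
qed

lemma pow_nat_mod: "x \<in> carrier G \<Longrightarrow> x [^] (n::nat) = x [^] (n mod p)"
proof -
  assume x: "x \<in> carrier G"
  have "x [^] n = x [^] (int n)" by (simp add: int_pow_int)
  also have "\<dots> = x [^] (int n mod int p)" by (rule pow_mod[OF x])
  also have "int n mod int p = int (n mod p)" by (simp add: zmod_int)
  finally show ?thesis by (simp add: int_pow_int)
qed

lemma pow_gen:
  assumes x: "x \<in> carrier G" and k: "\<not> int p dvd k"
  shows "\<exists>m::int. x = (x [^] k) [^] m"
proof -
  have pi: "Factorial_Ring.prime (int p)" using prime_p by simp
  have "coprime (int p) k" using pi k by (simp add: prime_imp_coprime)
  then have g: "gcd (int p) k = 1" by simp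
  obtain u v where uv: "u * int p + v * k = gcd (int p) k" using bezout_int by blast
  then have "u * int p + v * k = 1" using g by simp
  then have "x = x [^] (int p * u + k * v)" using x by (simp add: algebra_simps)
  also have "\<dots> = x [^] (int p * u) \<otimes> x [^] (k * v)" by (simp add: int_pow_mult x)
  also have "\<dots> = (x [^] k) [^] v" using pow_p[OF x] x by (simp add: int_pow_pow)
  finally show ?thesis by blast
qed

lemma Z_sub: "Z \<subseteq> carrier G" by (auto simp: grp_center_def)

lemma Z_central: "z \<in> Z \<Longrightarrow> x \<in> carrier G \<Longrightarrow> z \<otimes> x = x \<otimes> z"
  by (auto simp: grp_center_def)

lemma comm_inv: "a \<in> carrier G \<Longrightarrow> x \<in> carrier G \<Longrightarrow> a \<otimes> x = x \<otimes> a \<Longrightarrow> inv a \<otimes> x = x \<otimes> inv a"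
proof -
  assume a: "a \<in> carrier G" and x: "x \<in> carrier G" and c: "a \<otimes> x = x \<otimes> a"
  have "inv a \<otimes> x = inv a \<otimes> (x \<otimes> a) \<otimes> inv a" using a x by (simp add: m_assoc)
  also have "\<dots> = inv a \<otimes> (a \<otimes> x) \<otimes> inv a" using c by simp
  also have "\<dots> = x \<otimes> inv a" using a x by (simp add: m_assoc[symmetric])
  finally show ?thesis .
qed

lemma Cz_subgroup: "a \<in> carrier G \<Longrightarrow> subgroup (Cz a) G"
proof (rule subgroupI)
  assume a: "a \<in> carrier G"
  show "Cz a \<subseteq> carrier G" by (auto simp: Cz_def)
  show "Cz a \<noteq> {}" using a by (auto simp: Cz_def)
  fix x assume "x \<in> Cz a"
  then show "inv x \<in> Cz a" using comm_inv a by (auto simp: Cz_def)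
next
  fix x y assume a: "a \<in> carrier G" and "x \<in> Cz a" "y \<in> Cz a"
  then have x: "x \<in> carrier G" "x \<otimes> a = a \<otimes> x" and y: "y \<in> carrier G" "y \<otimes> a = a \<otimes> y"
    by (auto simp: Cz_def)
  have "x \<otimes> y \<otimes> a = x \<otimes> (a \<otimes> y)" using x y a by (simp add: m_assoc)
  also have "\<dots> = a \<otimes> (x \<otimes> y)" using x y a by (simp add: m_assoc[symmetric])
  finally show "x \<otimes> y \<in> Cz a" using x y by (auto simp: Cz_def)
qed

lemma comm_pow: "a \<in> carrier G \<Longrightarrow> b \<in> carrier G \<Longrightarrow> b \<otimes> a = a \<otimes> b \<Longrightarrow> b [^] (k::int) \<otimes> a = a \<otimes> b [^] k"
proof -
  assume a: "a \<in> carrier G" and b: "b \<in> carrier G" "b \<otimes> a = a \<otimes> b"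
  then have "b \<in> Cz a" by (simp add: Cz_def)
  then have "b [^] k \<in> Cz a" using subgroup_int_pow_closed[OF Cz_subgroup[OF a]] by blast
  then show ?thesis by (simp add: Cz_def)
qed

lemma comm_pow2: "a \<in> carrier G \<Longrightarrow> b \<in> carrier G \<Longrightarrow> b \<otimes> a = a \<otimes> b \<Longrightarrow> b [^] (k::int) \<otimes> a [^] (l::int) = a [^] l \<otimes> b [^] k"
proof -
  assume a: "a \<in> carrier G" and b: "b \<in> carrier G" "b \<otimes> a = a \<otimes> b"
  then have "b [^] k \<otimes> a = a \<otimes> b [^] k" by (rule comm_pow)
  then have "a [^] l \<otimes> b [^] k = b [^] k \<otimes> a [^] l" using a b by (intro comm_pow) auto
  then show ?thesis by simp
qed

lemma comm_from_pow:
  assumes a: "a \<in> carrier G" and x: "x \<in> carrier G" and k: "\<not> int p dvd k"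
    and c: "x \<otimes> a [^] k = a [^] k \<otimes> x"
  shows "x \<otimes> a = a \<otimes> x"
proof -
  obtain m :: int where m: "a = (a [^] k) [^] m" using pow_gen[OF a k] by blast
  have "(a [^] k) [^] m \<otimes> x = x \<otimes> (a [^] k) [^] m"
    using comm_pow[of x "a [^] k" m] c a x by simp
  then have "a \<otimes> x = x \<otimes> a" by (simp only: m[symmetric])
  then show ?thesis by simp
qed

lemma Z_subgroup: "subgroup Z G"
proof (rule subgroupI)
  show "Z \<subseteq> carrier G" by (rule Z_sub)
  show "Z \<noteq> {}" using one_closed by (auto simp: grp_center_def)
next
  fix a assume a: "a \<in> Z"
  then have ac: "a \<in> carrier G" using Z_sub by auto
  show "inv a \<in> Z" unfolding grp_center_def
  proof (safe)
    show "inv a \<in> carrier G" using ac by simp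
    fix x assume x: "x \<in> carrier G"
    have "a \<otimes> x = x \<otimes> a" using Z_central a x by blast
    then show "inv a \<otimes> x = x \<otimes> inv a" using ac x comm_inv by blast
  qed
next
  fix a b assume ab: "a \<in> Z" "b \<in> Z"
  show "a \<otimes> b \<in> Z" unfolding grp_center_def
  proof safe
    show "a \<otimes> b \<in> carrier G" using ab Z_sub by auto
    fix x assume x: "x \<in> carrier G"
    have ac: "a \<in> carrier G" "b \<in> carrier G" using ab Z_sub by auto
    have "a \<otimes> b \<otimes> x = a \<otimes> (x \<otimes> b)" using Z_central[OF ab(2) x] ac x by (simp add: m_assoc)
    also have "\<dots> = x \<otimes> (a \<otimes> b)" using Z_central[OF ab(1) x] ac x by (simp add: m_assoc[symmetric])
    finally show "a \<otimes> b \<otimes> x = x \<otimes> (a \<otimes> b)" .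
  qed
qed

lemma Z_pow: "z \<in> Z \<Longrightarrow> z [^] (k::int) \<in> Z"
  using subgroup_int_pow_closed[OF Z_subgroup] by blast


lemma Zc: "z \<in> Z \<Longrightarrow> z \<in> carrier G" using Z_sub by auto

lemma Z_move: "z \<in> Z \<Longrightarrow> x \<in> carrier G \<Longrightarrow> y \<in> carrier G \<Longrightarrow> x \<otimes> z \<otimes> y = x \<otimes> y \<otimes> z"
  using Z_central[of z y] Zc[of z] by (simp add: m_assoc)

lemma Z_lcomm: "z \<in> Z \<Longrightarrow> x \<in> carrier G \<Longrightarrow> y \<in> carrier G \<Longrightarrow> z \<otimes> (x \<otimes> y) = x \<otimes> (z \<otimes> y)"
  using Z_central[of z x] Zc[of z] by (simp add: m_assoc[symmetric])

lemma swap_eq: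
  assumes "x \<in> carrier G" "y \<in> carrier G" "x' \<in> carrier G" "y' \<in> carrier G" "x \<otimes> y = x' \<otimes> y'"
  shows "inv x' \<otimes> x = y' \<otimes> inv y"
proof -
  have "x' \<otimes> (y' \<otimes> inv y) = (x' \<otimes> y') \<otimes> inv y" using assms(1-4) by (simp add: m_assoc)
  also have "\<dots> = (x \<otimes> y) \<otimes> inv y" by (simp only: assms(5))
  also have "\<dots> = x" using assms(1-4) by (simp add: m_assoc)
  finally have "x = x' \<otimes> (y' \<otimes> inv y)" by simp
  then show ?thesis using assms inv_solve_left' by simp
qed

definition AZ :: "'a \<Rightarrow> 'a set" where
  "AZ a = {a [^] (k::int) \<otimes> c | k c. c \<in> Z}"

lemma AZ_sub: "a \<in> carrier G \<Longrightarrow> AZ a \<subseteq> carrier G"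
  using Zc by (auto simp: AZ_def)

lemma AZ_subgroup: "a \<in> carrier G \<Longrightarrow> subgroup (AZ a) G"
proof (rule subgroupI)
  assume a: "a \<in> carrier G"
  show "AZ a \<subseteq> carrier G" by (rule AZ_sub[OF a])
  have "a [^] (0::int) \<otimes> \<one> \<in> AZ a" unfolding AZ_def using subgroup.one_closed[OF Z_subgroup] by blast
  then show "AZ a \<noteq> {}" by blast
  fix x assume "x \<in> AZ a"
  then obtain k c where x: "x = a [^] (k::int) \<otimes> c" "c \<in> Z" by (auto simp: AZ_def)
  have "inv x = inv c \<otimes> inv (a [^] k)" using x a Zc by (simp add: inv_mult_group)
  also have "\<dots> = inv (a [^] k) \<otimes> inv c" using Z_central[of "inv c" "inv (a [^] k)"] x
      subgroup.m_inv_closed[OF Z_subgroup] a by simp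
  also have "\<dots> = a [^] (-k) \<otimes> inv c" using a by (simp add: int_pow_neg)
  finally show "inv x \<in> AZ a" unfolding AZ_def using subgroup.m_inv_closed[OF Z_subgroup x(2)] by blast
next
  fix x y assume a: "a \<in> carrier G" and "x \<in> AZ a" "y \<in> AZ a"
  then obtain k c l d where x: "x = a [^] (k::int) \<otimes> c" "c \<in> Z" and y: "y = a [^] (l::int) \<otimes> d" "d \<in> Z"
    by (auto simp: AZ_def)
  have "x \<otimes> y = a [^] k \<otimes> c \<otimes> a [^] l \<otimes> d" using x y a Zc by (simp add: m_assoc)
  also have "\<dots> = a [^] k \<otimes> a [^] l \<otimes> c \<otimes> d" using Z_move[of c "a [^] k" "a [^] l"] x a by simp
  also have "\<dots> = a [^] (k + l) \<otimes> (c \<otimes> d)" using a x y Zc by (simp add: int_pow_mult m_assoc)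
  finally show "x \<otimes> y \<in> AZ a" unfolding AZ_def using subgroup.m_closed[OF Z_subgroup x(2) y(2)] by blast
qed

lemma AZ_comm: "a \<in> carrier G \<Longrightarrow> x \<in> AZ a \<Longrightarrow> y \<in> AZ a \<Longrightarrow> x \<otimes> y = y \<otimes> x"
proof -
  assume a: "a \<in> carrier G" and "x \<in> AZ a" "y \<in> AZ a"
  then obtain k c l d where x: "x = a [^] (k::int) \<otimes> c" "c \<in> Z" and y: "y = a [^] (l::int) \<otimes> d" "d \<in> Z"
    by (auto simp: AZ_def)
  have "x \<otimes> y = a [^] k \<otimes> a [^] l \<otimes> c \<otimes> d"
    using x y a Zc Z_lcomm[of c "a [^] l" d] by (simp add: m_assoc)
  also have "\<dots> = a [^] l \<otimes> a [^] k \<otimes> c \<otimes> d"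
    using a by (simp add: int_pow_mult[symmetric] add.commute)
  also have "\<dots> = a [^] l \<otimes> a [^] k \<otimes> d \<otimes> c"
    using x y a Zc Z_central[of c d] by (simp add: m_assoc)
  also have "\<dots> = y \<otimes> x"
    using x y a Zc Z_lcomm[of d "a [^] k" c] by (simp add: m_assoc)
  finally show ?thesis .
qed

lemma a_AZ: "a \<in> carrier G \<Longrightarrow> a \<in> AZ a"
proof -
  assume a: "a \<in> carrier G"
  have "a [^] (1::int) \<otimes> \<one> \<in> AZ a" unfolding AZ_def using subgroup.one_closed[OF Z_subgroup] by blast
  then show ?thesis using a by simp
qed

lemma Z_AZ: "a \<in> carrier G \<Longrightarrow> Z \<subseteq> AZ a"
proof
  fix z assume a: "a \<in> carrier G" and z: "z \<in> Z"
  have "a [^] (0::int) \<otimes> z \<in> AZ a" unfolding AZ_def using z by blast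
  then show "z \<in> AZ a" using z Zc by simp
qed

lemma AZ_card: "a \<in> carrier G \<Longrightarrow> card (AZ a) \<le> p * card Z"
proof -
  assume a: "a \<in> carrier G"
  have "AZ a \<subseteq> (\<lambda>(i, c). a [^] (i::nat) \<otimes> c) ` ({..<p} \<times> Z)"
  proof
    fix x assume "x \<in> AZ a"
    then obtain k c where x: "x = a [^] (k::int) \<otimes> c" "c \<in> Z" by (auto simp: AZ_def)
    have "a [^] k = a [^] (k mod int p)" by (rule pow_mod[OF a])
    also have "k mod int p = int (nat (k mod int p))" using p2 by simp
    finally have "a [^] k = a [^] (nat (k mod int p))" by (simp add: int_pow_int)
    moreover have "nat (k mod int p) < p" using p2 by (simp add: nat_less_iff)
    ultimately show "x \<in> (\<lambda>(i, c). a [^] (i::nat) \<otimes> c) ` ({..<p} \<times> Z)" using x by force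
  qed
  moreover have "finite Z" using fin Z_sub finite_subset by blast
  ultimately have "card (AZ a) \<le> card ({..<p} \<times> Z)"
    by (meson card_image_le card_mono finite_SigmaI finite_imageI finite_lessThan order_trans)
  then show ?thesis by (simp add: card_cartesian_product)
qed


lemma small_dvd: "x < p \<Longrightarrow> y < p \<Longrightarrow> int p dvd (int x - int y) \<Longrightarrow> x = y"
proof -
  assume "x < p" "y < p" "int p dvd (int x - int y)"
  then have "[int x = int y] (mod int p)" by (simp add: cong_iff_dvd_diff)
  then have "[x = y] (mod p)" by (simp add: cong_int_iff)
  then show "x = y" using \<open>x < p\<close> \<open>y < p\<close> by (simp add: cong_def)
qed

lemma pow_diff_nat: "a \<in> carrier G \<Longrightarrow> inv (a [^] (i'::nat)) \<otimes> a [^] (i::nat) = a [^] (int i - int i')"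
proof -
  assume a: "a \<in> carrier G"
  have e: "int i - int i' = - int i' + int i" by simp
  have "a [^] (int i - int i') = a [^] (- int i' + int i)" by (simp only: e)
  also have "\<dots> = a [^] (- int i') \<otimes> a [^] (int i)" by (rule int_pow_mult[OF a])
  also have "\<dots> = inv (a [^] i') \<otimes> a [^] i" by (simp add: int_pow_neg a int_pow_int)
  finally show ?thesis by simp
qed

lemma pow_diff_nat2: "a \<in> carrier G \<Longrightarrow> a [^] (i::nat) \<otimes> inv (a [^] (i'::nat)) = a [^] (int i - int i')"
  by (simp add: int_pow_diff int_pow_int)

lemma sub_cancel: "subgroup S G \<Longrightarrow> x \<in> carrier G \<Longrightarrow> d \<in> S \<Longrightarrow> x \<otimes> d \<in> S \<Longrightarrow> x \<in> S"
proof -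
  assume S: "subgroup S G" and x: "x \<in> carrier G" and d: "d \<in> S" "x \<otimes> d \<in> S"
  have dc: "d \<in> carrier G" using S d subgroup.subset by blast
  have "x = (x \<otimes> d) \<otimes> inv d" using x dc by (simp add: m_assoc)
  then show ?thesis using S d by (metis subgroup.m_closed subgroup.m_inv_closed)
qed

lemma TL:
  assumes a: "a \<in> carrier G" "a \<notin> Z" and b: "b \<in> carrier G" "b \<notin> AZ a"
  shows "inj_on (\<lambda>(i, j, c). a [^] (i::nat) \<otimes> b [^] (j::nat) \<otimes> c) ({..<p} \<times> {..<p} \<times> Z)"
proof (rule inj_onI)
  fix u v assume u: "u \<in> {..<p} \<times> {..<p} \<times> Z" and v: "v \<in> {..<p} \<times> {..<p} \<times> Z"
    and E0: "(\<lambda>(i, j, c). a [^] (i::nat) \<otimes> b [^] (j::nat) \<otimes> c) u = (\<lambda>(i, j, c). a [^] (i::nat) \<otimes> b [^] (j::nat) \<otimes> c) v"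
  obtain i j c where u': "u = (i, j, c)" by (cases u) auto
  obtain i' j' c' where v': "v = (i', j', c')" by (cases v) auto
  have ij: "i < p" "j < p" "c \<in> Z" "i' < p" "j' < p" "c' \<in> Z" using u v u' v' by auto
  have cc: "c \<in> carrier G" "c' \<in> carrier G" using ij Zc by auto
  have E: "a [^] i \<otimes> (b [^] j \<otimes> c) = a [^] i' \<otimes> (b [^] j' \<otimes> c')"
    using E0 u' v' a b cc by (simp add: m_assoc)
  have S: "subgroup (AZ a) G" by (rule AZ_subgroup[OF a(1)])
  define d where "d = c' \<otimes> inv c"
  have d: "d \<in> Z" unfolding d_def using ij subgroup.m_closed[OF Z_subgroup] subgroup.m_inv_closed[OF Z_subgroup] by blast
  have dc: "d \<in> carrier G" using d Zc by blast
  have sw: "inv (a [^] i') \<otimes> a [^] i = (b [^] j' \<otimes> c') \<otimes> inv (b [^] j \<otimes> c)"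
    by (rule swap_eq) (use a b cc E in auto)
  have R: "(b [^] j' \<otimes> c') \<otimes> inv (b [^] j \<otimes> c) = b [^] j' \<otimes> inv (b [^] j) \<otimes> d"
  proof -
    have "(b [^] j' \<otimes> c') \<otimes> inv (b [^] j \<otimes> c) = b [^] j' \<otimes> d \<otimes> inv (b [^] j)"
      using b cc by (simp add: inv_mult_group m_assoc d_def)
    also have "\<dots> = b [^] j' \<otimes> inv (b [^] j) \<otimes> d" using Z_move[OF d] b by simp
    finally show ?thesis .
  qed
  have L: "inv (a [^] i') \<otimes> a [^] i = a [^] (int i - int i')" by (rule pow_diff_nat[OF a(1)])
  have "a [^] (int i - int i') \<in> AZ a"
  proof -
    have "a [^] (int i - int i') \<otimes> \<one> \<in> AZ a" unfolding AZ_def using subgroup.one_closed[OF Z_subgroup] by blast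
    then show ?thesis using a by simp
  qed
  then have "b [^] j' \<otimes> inv (b [^] j) \<otimes> d \<in> AZ a" using sw R L by simp
  moreover have "d \<in> AZ a" using d Z_AZ[OF a(1)] by blast
  moreover have "b [^] j' \<otimes> inv (b [^] j) \<in> carrier G" using b by simp
  ultimately have "b [^] j' \<otimes> inv (b [^] j) \<in> AZ a"
    using sub_cancel[OF S] by blast
  then have bj: "b [^] (int j' - int j) \<in> AZ a" using pow_diff_nat2[OF b(1)] by simp
  have jj: "j = j'"
  proof (rule ccontr)
    assume "j \<noteq> j'"
    then have nd: "\<not> int p dvd (int j' - int j)" using small_dvd ij by metis
    obtain m :: int where m: "b = (b [^] (int j' - int j)) [^] m" using pow_gen[OF b(1) nd] by blast
    have "b \<in> AZ a" using subgroup_int_pow_closed[OF S bj] m by metis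
    then show False using b by simp
  qed
  have "b [^] j' \<otimes> inv (b [^] j) = \<one>" using jj b by simp
  then have "a [^] (int i - int i') = d" using sw R L dc by simp
  then have ad: "a [^] (int i - int i') \<in> Z" using d by simp
  have ii: "i = i'"
  proof (rule ccontr)
    assume "i \<noteq> i'"
    then have nd: "\<not> int p dvd (int i - int i')" using small_dvd ij by metis
    obtain m :: int where m: "a = (a [^] (int i - int i')) [^] m" using pow_gen[OF a(1) nd] by blast
    have "a \<in> Z" using Z_pow[OF ad] m by metis
    then show False using a by simp
  qed
  have "a [^] i \<otimes> (b [^] j \<otimes> c) = a [^] i \<otimes> (b [^] j \<otimes> c')" using E ii jj by simp
  then have "c = c'" using a b cc by simp
  then show "u = v" using u' v' ii jj by simp
qed


lemma finZ: "finite Z" using fin Z_sub finite_subset by blast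

lemma p_dvd_Z: "p dvd card Z"
proof -
  define \<phi> where "\<phi> = (\<lambda>g. (\<lambda>h \<in> carrier G. g \<otimes> h \<otimes> inv g))"
  interpret A: group_action G "carrier G" \<phi>
    unfolding \<phi>_def by (rule action_by_conjugation)
  define f where "f = (\<lambda>x. if x \<in> Z then 0 else (1::nat))"
  have sum: "(\<Sum>orb\<in>orbits G (carrier G) \<phi>. \<Sum>x\<in>orb. f x) = (\<Sum>x\<in>carrier G. f x)"
    using A.disjoint_sum[OF fin] .
  have "(\<Sum>x\<in>carrier G. f x) = card (carrier G - Z)"
    unfolding f_def using fin by (simp add: sum.If_cases Diff_eq)
  also have "\<dots> = card (carrier G) - card Z" using Z_sub fin by (simp add: card_Diff_subset finZ)
  finally have s2: "(\<Sum>x\<in>carrier G. f x) = p ^ 3 - card Z" using ordG by (simp add: order_def)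
  have "p dvd (\<Sum>orb\<in>orbits G (carrier G) \<phi>. \<Sum>x\<in>orb. f x)"
  proof (rule dvd_sum)
    fix orb assume "orb \<in> orbits G (carrier G) \<phi>"
    then obtain x where x: "x \<in> carrier G" and orb: "orb = orbit G \<phi> x" by (auto simp: orbits_def)
    have orbit_eq: "orbit G \<phi> x = {g \<otimes> x \<otimes> inv g | g. g \<in> carrier G}"
      using x by (auto simp: orbit_def \<phi>_def)
    show "p dvd (\<Sum>y\<in>orb. f y)"
    proof (cases "x \<in> Z")
      case True
      have "orb = {x}"
      proof -
        have "g \<otimes> x \<otimes> inv g = x" if g: "g \<in> carrier G" for g
        proof -
          have "g \<otimes> x \<otimes> inv g = x \<otimes> g \<otimes> inv g" using Z_central[OF True g] by simp
          also have "\<dots> = x" using g x by (simp add: m_assoc)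
          finally show ?thesis .
        qed
        then show ?thesis using orb orbit_eq x by auto (metis one_closed inv_one r_one l_one)
      qed
      then show ?thesis using True by (simp add: f_def)
    next
      case False
      have nz: "y \<notin> Z" if "y \<in> orb" for y
      proof
        assume yZ: "y \<in> Z"
        from that obtain g where g: "g \<in> carrier G" and y: "y = g \<otimes> x \<otimes> inv g" using orb orbit_eq by auto
        have "y \<otimes> g = g \<otimes> y" using Z_central[OF yZ g] .
        then have "g \<otimes> x = g \<otimes> y" using y g x by (simp add: m_assoc)
        then have "x = y" using g x Zc[OF yZ] by simp
        then show False using False yZ by simp
      qed
      then have s: "(\<Sum>y\<in>orb. f y) = card orb" by (simp add: f_def)
      have "orb \<subseteq> carrier G" using orb orbit_eq x by auto
      then have fo: "finite orb" using fin finite_subset by blast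
      have "card orb * card (stabilizer G \<phi> x) = p ^ 3"
        using A.orbit_stabilizer_theorem[OF x] orb ordG by simp
      then have "card orb dvd p ^ 3" by (metis dvd_triv_left)
      then obtain k where k: "card orb = p ^ k" using divides_primepow_nat[OF prime_p] by blast
      have "card orb \<noteq> 1"
      proof
        assume c1: "card orb = 1"
        obtain g where g: "g \<in> carrier G" "g \<otimes> x \<noteq> x \<otimes> g" using False x by (auto simp: grp_center_def)
        have "\<one> \<otimes> x \<otimes> inv \<one> \<in> orb" using orb orbit_eq by blast
        then have "x \<in> orb" using x by simp
        moreover have "g \<otimes> x \<otimes> inv g \<in> orb" using orb orbit_eq g by auto
        moreover have "g \<otimes> x \<otimes> inv g \<noteq> x"
        proof
          assume "g \<otimes> x \<otimes> inv g = x"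
          then have "g \<otimes> x \<otimes> inv g \<otimes> g = x \<otimes> g" by simp
          then show False using g x by (simp add: m_assoc)
        qed
        ultimately show False using c1 card_le_Suc0_iff_eq[OF fo] by auto
      qed
      then have "k \<noteq> 0" using k by auto
      then have "p dvd card orb" using k by simp
      then show ?thesis using s by simp
    qed
  qed
  then have "p dvd p ^ 3 - card Z" using sum s2 by simp
  moreover have "card Z \<le> p ^ 3" using Z_sub fin ordG card_mono by (metis order_def)
  ultimately show ?thesis
    by (metis dvd_diffD1 dvd_power le_add_diff_inverse zero_less_numeral prime_p dvd_refl
        le_add1 zero_le)
qed


lemma ex_noncomm: "\<exists>x y. x \<in> carrier G \<and> y \<in> carrier G \<and> x \<otimes> y \<noteq> y \<otimes> x"
  using noncomm group_comm_groupI by blast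

lemma cardZ: "card Z = p"
proof -
  have l: "card (rcosets Z) * card Z = order G" by (rule lagrange[OF Z_subgroup])
  then have "card Z dvd p ^ 3" using ordG by (metis dvd_triv_right)
  then obtain k where k: "k \<le> 3" "card Z = p ^ k" using divides_primepow_nat[OF prime_p] by blast
  have "k \<noteq> 0"
  proof
    assume "k = 0" then have "p dvd 1" using k p_dvd_Z by simp
    then show False using p2 by simp
  qed
  moreover have "k \<noteq> 3"
  proof
    assume "k = 3"
    then have "card Z = card (carrier G)" using k ordG by (simp add: order_def)
    then have "Z = carrier G" using card_subset_eq[OF fin Z_sub] by simp
    then show False using ex_noncomm Z_central by blast
  qed
  moreover have "k \<noteq> 2"
  proof
    assume k2: "k = 2"
    then have cZ: "card Z = p ^ 2" using k by simp
    have "Z \<noteq> carrier G"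
    proof
      assume "Z = carrier G" then show False using ex_noncomm Z_central by blast
    qed
    then obtain a where a: "a \<in> carrier G" "a \<notin> Z" using Z_sub by blast
    show False
    proof (cases "AZ a = carrier G")
      case True
      then show False using ex_noncomm AZ_comm[OF a(1)] by blast
    next
      case False
      then obtain b where b: "b \<in> carrier G" "b \<notin> AZ a" using AZ_sub[OF a(1)] by blast
      let ?f = "\<lambda>(i, j, c). a [^] (i::nat) \<otimes> b [^] (j::nat) \<otimes> c"
      have inj: "inj_on ?f ({..<p} \<times> {..<p} \<times> Z)" by (rule TL[OF a b])
      have "?f ` ({..<p} \<times> {..<p} \<times> Z) \<subseteq> carrier G" using a b Zc by auto
      then have "card (?f ` ({..<p} \<times> {..<p} \<times> Z)) \<le> card (carrier G)" using fin card_mono by blast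
      moreover have "card (?f ` ({..<p} \<times> {..<p} \<times> Z)) = p * (p * p ^ 2)"
        using card_image[OF inj] cZ by (simp add: card_cartesian_product)
      ultimately have "p * (p * p ^ 2) \<le> p ^ 3" using ordG by (simp add: order_def)
      moreover have "p * (p * p ^ 2) = p * p ^ 3" by (simp add: power_def)
      ultimately have "p * p ^ 3 \<le> 1 * p ^ 3" by simp
      then have "p \<le> 1" using p2 by (metis mult_le_cancel2 zero_less_power not_le zero_less_numeral le_trans one_le_numeral prime_gt_0_nat prime_p)
      then show False using p2 by simp
    qed
  qed
  ultimately have "k = 1" using k by auto
  then show ?thesis using k by simp
qed

lemma TL_full:
  assumes a: "a \<in> carrier G" "a \<notin> Z" and b: "b \<in> carrier G" "b \<notin> AZ a"
  shows "carrier G = (\<lambda>(i, j, c). a [^] (i::nat) \<otimes> b [^] (j::nat) \<otimes> c) ` ({..<p} \<times> {..<p} \<times> Z)"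
proof -
  let ?f = "\<lambda>(i, j, c). a [^] (i::nat) \<otimes> b [^] (j::nat) \<otimes> c"
  have inj: "inj_on ?f ({..<p} \<times> {..<p} \<times> Z)" by (rule TL[OF a b])
  have sub: "?f ` ({..<p} \<times> {..<p} \<times> Z) \<subseteq> carrier G" using a b Zc by auto
  have "card (?f ` ({..<p} \<times> {..<p} \<times> Z)) = p * (p * p)"
    using card_image[OF inj] cardZ by (simp add: card_cartesian_product)
  also have "\<dots> = card (carrier G)" using ordG by (simp add: order_def power3_eq_cube)
  finally show ?thesis using card_subset_eq[OF fin sub] by simp
qed

lemma Cz_AZ:
  assumes w: "w \<in> carrier G" "w \<notin> Z" and b: "b \<in> carrier G" "b \<otimes> w = w \<otimes> b"
  shows "b \<in> AZ w"
proof (rule ccontr)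
  assume nb: "b \<notin> AZ w"
  have "carrier G \<subseteq> Cz w"
  proof
    fix g assume "g \<in> carrier G"
    then obtain i j c where g: "g = w [^] (i::nat) \<otimes> b [^] (j::nat) \<otimes> c" "c \<in> Z"
      using TL_full[OF w b(1) nb] by auto
    have S: "subgroup (Cz w) G" by (rule Cz_subgroup[OF w(1)])
    have "w \<in> Cz w" using w by (simp add: Cz_def)
    then have "w [^] (int i) \<in> Cz w" using subgroup_int_pow_closed[OF S] by blast
    then have 1: "w [^] i \<in> Cz w" by (simp add: int_pow_int)
    have "b \<in> Cz w" using b by (simp add: Cz_def)
    then have "b [^] (int j) \<in> Cz w" using subgroup_int_pow_closed[OF S] by blast
    then have 2: "b [^] j \<in> Cz w" by (simp add: int_pow_int)
    have 3: "c \<in> Cz w" using g Z_central[of c w] w Zc by (simp add: Cz_def)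
    have "w [^] i \<otimes> b [^] j \<otimes> c \<in> Cz w"
      by (rule subgroup.m_closed[OF S subgroup.m_closed[OF S 1 2] 3])
    then show "g \<in> Cz w" using g by simp
  qed
  have "\<forall>x\<in>carrier G. w \<otimes> x = x \<otimes> w"
  proof
    fix x assume "x \<in> carrier G"
    then have "x \<in> Cz w" using \<open>carrier G \<subseteq> Cz w\<close> by blast
    then show "w \<otimes> x = x \<otimes> w" by (simp add: Cz_def)
  qed
  then have "w \<in> Z" using w by (simp add: grp_center_def)
  then show False using w by simp
qed


definition cj :: "'a \<Rightarrow> 'a \<Rightarrow> 'a" where
  "cj x g = inv x \<otimes> g \<otimes> x"

lemma cj_closed: "x \<in> carrier G \<Longrightarrow> g \<in> carrier G \<Longrightarrow> cj x g \<in> carrier G"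
  by (simp add: cj_def)

lemma cj_mult: "x \<in> carrier G \<Longrightarrow> y \<in> carrier G \<Longrightarrow> g \<in> carrier G \<Longrightarrow> cj (x \<otimes> y) g = cj y (cj x g)"
  by (simp add: cj_def inv_mult_group m_assoc)

lemma cj_id: "x \<in> carrier G \<Longrightarrow> g \<in> carrier G \<Longrightarrow> x \<otimes> g = g \<otimes> x \<Longrightarrow> cj x g = g"
proof -
  assume x: "x \<in> carrier G" and g: "g \<in> carrier G" and c: "x \<otimes> g = g \<otimes> x"
  have "cj x g = inv x \<otimes> (g \<otimes> x)" using x g by (simp add: cj_def m_assoc)
  also have "\<dots> = inv x \<otimes> (x \<otimes> g)" using c by simp
  also have "\<dots> = g" using x g by (simp add: m_assoc[symmetric])
  finally show ?thesis .
qed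

lemma cj_id_iff: "x \<in> carrier G \<Longrightarrow> g \<in> carrier G \<Longrightarrow> cj x g = g \<Longrightarrow> g \<otimes> x = x \<otimes> g"
proof -
  assume x: "x \<in> carrier G" and g: "g \<in> carrier G" and c: "cj x g = g"
  have "x \<otimes> cj x g = g \<otimes> x" using x g by (simp add: cj_def m_assoc[symmetric])
  then show ?thesis using c by simp
qed

lemma cj_inv: "x \<in> carrier G \<Longrightarrow> g \<in> carrier G \<Longrightarrow> cj (inv x) (cj x g) = g"
proof -
  assume x: "x \<in> carrier G" and g: "g \<in> carrier G"
  have "cj (x \<otimes> inv x) g = cj (inv x) (cj x g)" using x g by (intro cj_mult) auto
  then have "cj (inv x) (cj x g) = cj (x \<otimes> inv x) g" by simp
  also have "\<dots> = g" using x g by (simp add: cj_def)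
  finally show ?thesis .
qed

lemma conj_comm:
  assumes g: "g \<in> carrier G" and h: "h \<in> carrier G"
  shows "cj h g \<otimes> g = g \<otimes> cj h g"
proof (cases "g \<in> Z")
  case True
  then have "cj h g = g" using Z_central[OF True h] h g by (intro cj_id) auto
  then show ?thesis by simp
next
  case False
  obtain h0 where h0: "h0 \<in> carrier G" "h0 \<otimes> g \<noteq> g \<otimes> h0"
    using False g by (auto simp: grp_center_def)
  have h0n: "h0 \<notin> AZ g" using AZ_comm[OF g _ a_AZ[OF g]] h0 by metis
  have full: "carrier G = (\<lambda>(i, j, c). g [^] (i::nat) \<otimes> h0 [^] (j::nat) \<otimes> c) ` ({..<p} \<times> {..<p} \<times> Z)"
    by (rule TL_full[OF g False h0(1) h0n])
  define K where "K = (\<lambda>k. cj k g) ` carrier G"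
  have K1: "K \<subseteq> (\<lambda>j. cj (h0 [^] (j::nat)) g) ` {..<p}"
  proof
    fix y assume "y \<in> K"
    then obtain k where k: "k \<in> carrier G" "y = cj k g" by (auto simp: K_def)
    then obtain i j c where ijc: "i < p" "j < p" "c \<in> Z" "k = g [^] (i::nat) \<otimes> h0 [^] (j::nat) \<otimes> c"
      using full by auto
    have cc: "c \<in> carrier G" using ijc Zc by auto
    have "cj (g [^] i) g = g" using g by (intro cj_id) (auto simp: nat_pow_Suc2[symmetric])
    then have "cj k g = cj c (cj (h0 [^] j) g)" using ijc g h0 cc by (simp add: cj_mult)
    also have "\<dots> = cj (h0 [^] j) g" using Z_central[OF ijc(3)] cc g h0 cj_closed by (intro cj_id) auto
    finally show "y \<in> (\<lambda>j. cj (h0 [^] (j::nat)) g) ` {..<p}" using k ijc by auto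
  qed
  have fK: "finite K" using fin by (simp add: K_def)
  have cK: "card K \<le> p"
    using card_image_le[of "{..<p}" "\<lambda>j. cj (h0 [^] (j::nat)) g"] card_mono[OF _ K1] by simp
  have gK: "g \<in> K" using g unfolding K_def by (metis cj_id image_eqI one_closed l_one r_one)
  define x where "x = cj h g"
  have xc: "x \<in> carrier G" using g h by (simp add: x_def cj_closed)
  show ?thesis
  proof (rule ccontr)
    assume nc: "\<not> cj h g \<otimes> g = g \<otimes> cj h g"
    then have nc': "x \<otimes> g \<noteq> g \<otimes> x" by (simp add: x_def)
    let ?y = "\<lambda>i::nat. cj (g [^] i) x"
    have inK: "?y i \<in> K - {g}" for i
    proof
      have "?y i = cj (h \<otimes> g [^] i) g" using g h by (simp add: x_def cj_mult)
      then show "?y i \<in> K" using g h unfolding K_def by auto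
      show "?y i \<notin> {g}"
      proof
        assume "?y i \<in> {g}"
        then have "cj (inv (g [^] i)) (?y i) = cj (inv (g [^] i)) g" by simp
        also have "\<dots> = g"
        proof (rule cj_id)
          have "g [^] i \<otimes> g = g \<otimes> g [^] i" using g by (simp add: nat_pow_Suc2[symmetric])
          then show "inv (g [^] i) \<otimes> g = g \<otimes> inv (g [^] i)" using g comm_inv by simp
        qed (use g in auto)
        finally have "x = g" using cj_inv g xc by simp
        then show False using nc' by simp
      qed
    qed
    have inj: "inj_on ?y {..<p}"
    proof (rule inj_onI)
      fix i i' assume i: "i \<in> {..<p}" "i' \<in> {..<p}" and e: "?y i = ?y i'"
      have "cj (inv (g [^] i')) (?y i) = cj (inv (g [^] i')) (?y i')" using e by simp
      then have "cj (g [^] i \<otimes> inv (g [^] i')) x = x" using g xc by (simp add: cj_mult cj_inv)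
      then have "x \<otimes> g [^] (int i - int i') = g [^] (int i - int i') \<otimes> x"
        using cj_id_iff pow_diff_nat2[OF g] g xc by (metis int_pow_closed)
      then show "i = i'"
        using comm_from_pow[OF g xc] small_dvd i nc' by (metis lessThan_iff)
    qed
    have "card (?y ` {..<p}) \<le> card (K - {g})" using inK fK by (intro card_mono) auto
    then have "p \<le> card K - 1" using card_image[OF inj] gK fK by simp
    then show False using cK p2 by simp
  qed
qed

lemma comm_central:
  assumes g: "g \<in> carrier G" and h: "h \<in> carrier G"
  shows "inv g \<otimes> inv h \<otimes> g \<otimes> h \<in> Z"
proof -
  define u where "u = inv g \<otimes> inv h \<otimes> g \<otimes> h"
  have "u \<in> Z"
  proof (rule ccontr)
  assume nu: "u \<notin> Z"
  have uc: "u \<in> carrier G" using g h by (simp add: u_def)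
  have u1: "u = inv g \<otimes> cj h g" using g h by (simp add: u_def cj_def m_assoc)
  have u2: "u = cj g (inv h) \<otimes> h" using g h by (simp add: u_def cj_def m_assoc)
  have Sg: "subgroup (Cz g) G" by (rule Cz_subgroup[OF g])
  have "inv g \<in> Cz g" using g by (simp add: Cz_def)
  moreover have "cj h g \<in> Cz g" using conj_comm[OF g h] g h by (simp add: Cz_def cj_closed)
  ultimately have "u \<in> Cz g" using u1 subgroup.m_closed[OF Sg] by simp
  then have gu: "g \<otimes> u = u \<otimes> g" by (simp add: Cz_def)
  have Sh: "subgroup (Cz h) G" by (rule Cz_subgroup[OF h])
  have xc: "cj g (inv h) \<in> carrier G" using g h by (simp add: cj_closed)
  have c1: "cj g (inv h) \<otimes> inv h = inv h \<otimes> cj g (inv h)" using conj_comm[of "inv h" g] g h by simp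
  have "inv (inv h) \<otimes> cj g (inv h) = cj g (inv h) \<otimes> inv (inv h)"
    by (rule comm_inv) (use c1 h xc in auto)
  then have "cj g (inv h) \<otimes> h = h \<otimes> cj g (inv h)" using h by simp
  then have "cj g (inv h) \<in> Cz h" using g h by (simp add: Cz_def cj_closed)
  moreover have "h \<in> Cz h" using h by (simp add: Cz_def)
  ultimately have "u \<in> Cz h" using u2 subgroup.m_closed[OF Sh] by simp
  then have hu: "h \<otimes> u = u \<otimes> h" by (simp add: Cz_def)
  have "g \<in> AZ u" using Cz_AZ[OF uc nu g] gu by simp
  moreover have "h \<in> AZ u" using Cz_AZ[OF uc nu h] hu by simp
  ultimately have "g \<otimes> h = h \<otimes> g" using AZ_comm[OF uc] by blast
  then have "u = inv g \<otimes> inv h \<otimes> (h \<otimes> g)" using g h by (simp add: u_def m_assoc)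
  also have "\<dots> = \<one>" using g h by (simp add: m_assoc[symmetric]) (simp add: m_assoc)
  finally have "u = \<one>" .
  then show False using nu subgroup.one_closed[OF Z_subgroup] by simp
  qed
  then show ?thesis by (simp add: u_def)
qed


lemma cancel1: "x \<in> carrier G \<Longrightarrow> y \<in> carrier G \<Longrightarrow> x \<otimes> (inv x \<otimes> y) = y"
  by (simp add: m_assoc[symmetric])
lemma cancel2: "x \<in> carrier G \<Longrightarrow> y \<in> carrier G \<Longrightarrow> inv x \<otimes> (x \<otimes> y) = y"
  by (simp add: m_assoc[symmetric])

lemma swap_Z:
  assumes a: "a \<in> carrier G" and b: "b \<in> carrier G"
  shows "\<exists>w\<in>Z. b \<otimes> a = a \<otimes> b \<otimes> w"
proof -
  define w where "w = inv b \<otimes> inv a \<otimes> b \<otimes> a"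
  have "w \<in> Z" unfolding w_def by (rule comm_central[OF b a])
  moreover have "a \<otimes> b \<otimes> w = b \<otimes> a" using a b by (simp add: w_def m_assoc cancel1)
  ultimately show ?thesis by metis
qed

lemma prod_xy:
  assumes x: "x \<in> carrier G" and y: "y \<in> carrier G"
    and c1: "c1 \<in> Z" and c2: "c2 \<in> Z"
  shows "\<exists>c\<in>Z. (x [^] (i::nat) \<otimes> y [^] (j::nat) \<otimes> c1) \<otimes> (x [^] (I::nat) \<otimes> y [^] (J::nat) \<otimes> c2)
      = x [^] (i + I) \<otimes> y [^] (j + J) \<otimes> c"
proof -
  obtain w where w: "w \<in> Z" "y [^] j \<otimes> x [^] I = x [^] I \<otimes> y [^] j \<otimes> w"
    using swap_Z[of "x [^] I" "y [^] j"] x y by auto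
  have cc: "c1 \<in> carrier G" "c2 \<in> carrier G" "w \<in> carrier G" using c1 c2 w Zc by auto
  have "(x [^] i \<otimes> y [^] j \<otimes> c1) \<otimes> (x [^] I \<otimes> y [^] J \<otimes> c2)
      = x [^] i \<otimes> (y [^] j \<otimes> (c1 \<otimes> (x [^] I \<otimes> (y [^] J \<otimes> c2))))" using x y cc by (simp add: m_assoc)
  also have "\<dots> = x [^] i \<otimes> (y [^] j \<otimes> (x [^] I \<otimes> (y [^] J \<otimes> (c1 \<otimes> c2))))"
    using Z_lcomm[OF c1, of "x [^] I" "y [^] J \<otimes> c2"] Z_lcomm[OF c1, of "y [^] J" c2] x y cc by simp
  also have "\<dots> = x [^] i \<otimes> ((y [^] j \<otimes> x [^] I) \<otimes> (y [^] J \<otimes> (c1 \<otimes> c2)))"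
    using x y cc by (simp add: m_assoc)
  also have "\<dots> = x [^] i \<otimes> ((x [^] I \<otimes> y [^] j \<otimes> w) \<otimes> (y [^] J \<otimes> (c1 \<otimes> c2)))"
    using w by simp
  also have "\<dots> = x [^] i \<otimes> (x [^] I \<otimes> (y [^] j \<otimes> (w \<otimes> (y [^] J \<otimes> (c1 \<otimes> c2)))))"
    using x y cc by (simp add: m_assoc)
  also have "\<dots> = x [^] i \<otimes> (x [^] I \<otimes> (y [^] j \<otimes> (y [^] J \<otimes> (w \<otimes> (c1 \<otimes> c2)))))"
    using Z_lcomm[OF w(1), of "y [^] J" "c1 \<otimes> c2"] x y cc by simp
  also have "\<dots> = (x [^] i \<otimes> x [^] I) \<otimes> (y [^] j \<otimes> y [^] J) \<otimes> (w \<otimes> (c1 \<otimes> c2))"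
    using x y cc by (simp add: m_assoc)
  also have "\<dots> = x [^] (i + I) \<otimes> y [^] (j + J) \<otimes> (w \<otimes> (c1 \<otimes> c2))"
    using x y by (simp add: nat_pow_mult)
  finally show ?thesis using w c1 c2 subgroup.m_closed[OF Z_subgroup] by blast
qed

lemma pow_mult_p: "x \<in> carrier G \<Longrightarrow> p dvd n \<Longrightarrow> x [^] (n::nat) = \<one>"
  using pow_nat_mod[of x n] by simp

lemma part1_rep:
  assumes x: "x \<in> carrier G" "x \<notin> Z" and y: "y \<in> carrier G" "y \<notin> AZ x"
    and zs: "set zs \<subseteq> carrier G"
    and f: "\<And>g. g \<in> carrier G \<Longrightarrow> fst (f g) < p \<and> snd (f g) < p \<and> (\<exists>c\<in>Z. g = x [^] fst (f g) \<otimes> y [^] snd (f g) \<otimes> c)"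
  shows "\<exists>c\<in>Z. list_prod G zs = x [^] (sum_list (map (fst \<circ> f) zs)) \<otimes> y [^] (sum_list (map (snd \<circ> f) zs)) \<otimes> c"
  using zs
proof (induction zs)
  case Nil
  have "\<one> = x [^] (0::nat) \<otimes> y [^] (0::nat) \<otimes> \<one>" using x y by simp
  then show ?case using subgroup.one_closed[OF Z_subgroup] unfolding list_prod_def by (metis foldr.simps(1) id_apply list.simps(8) sum_list.Nil)
next
  case (Cons g zs)
  then have g: "g \<in> carrier G" and zs: "set zs \<subseteq> carrier G" by auto
  obtain c2 where c2: "c2 \<in> Z" "list_prod G zs = x [^] (sum_list (map (fst \<circ> f) zs)) \<otimes> y [^] (sum_list (map (snd \<circ> f) zs)) \<otimes> c2"
    using Cons.IH[OF zs] by blast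
  obtain c1 where c1: "c1 \<in> Z" "g = x [^] fst (f g) \<otimes> y [^] snd (f g) \<otimes> c1" using f[OF g] by blast
  let ?I = "sum_list (map (fst \<circ> f) zs)" and ?J = "sum_list (map (snd \<circ> f) zs)"
  obtain c where c: "c \<in> Z" "(x [^] fst (f g) \<otimes> y [^] snd (f g) \<otimes> c1) \<otimes> (x [^] ?I \<otimes> y [^] ?J \<otimes> c2)
      = x [^] (fst (f g) + ?I) \<otimes> y [^] (snd (f g) + ?J) \<otimes> c"
    using prod_xy[OF x(1) y(1) c1(1) c2(1), of "fst (f g)" "snd (f g)" ?I ?J] by blast
  have "list_prod G (g # zs) = g \<otimes> list_prod G zs" by (simp add: list_prod_def)
  also have "\<dots> = x [^] (fst (f g) + ?I) \<otimes> y [^] (snd (f g) + ?J) \<otimes> c"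
    using c(2) c1(2) c2(2) by simp
  finally show ?case using c(1) by (auto simp: o_def)
qed

lemma part1_exists:
  "\<exists>x y. x \<in> carrier G \<and> x \<notin> Z \<and> y \<in> carrier G \<and> y \<notin> AZ x"
proof -
  obtain x y where xy: "x \<in> carrier G" "y \<in> carrier G" "x \<otimes> y \<noteq> y \<otimes> x" using ex_noncomm by blast
  have "x \<notin> Z" using xy Z_central by blast
  moreover have "y \<notin> AZ x" using AZ_comm[OF xy(1) a_AZ[OF xy(1)]] xy by metis
  ultimately show ?thesis using xy by blast
qed


lemma Z_gen: "\<exists>z\<in>Z. Z = (\<lambda>k. z [^] (k::nat)) ` {..<p}"
proof -
  have "\<exists>z\<in>Z. z \<noteq> \<one>"
  proof (rule ccontr)
    assume "\<not> ?thesis"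
    then have "Z \<subseteq> {\<one>}" by auto
    then have "card Z \<le> 1" by (metis card.empty card.insert empty_iff finite.intros(1) card_mono finite.emptyI finite_insert insert_absorb le_0_eq le_SucI One_nat_def)
    then show False using cardZ p2 by simp
  qed
  then obtain z where z: "z \<in> Z" "z \<noteq> \<one>" by blast
  have zc: "z \<in> carrier G" using z Zc by auto
  have inj: "inj_on (\<lambda>k. z [^] (k::nat)) {..<p}"
  proof (rule inj_onI)
    fix k k' assume k: "k \<in> {..<p}" "k' \<in> {..<p}" and e: "z [^] k = z [^] k'"
    show "k = k'"
    proof (rule ccontr)
      assume ne: "k \<noteq> k'"
      have "z [^] (int k - int k') = \<one>" using pow_diff_nat[OF zc, of k' k] e zc by simp
      moreover have nd: "\<not> int p dvd (int k - int k')" using small_dvd k ne by auto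
      obtain m :: int where "z = (z [^] (int k - int k')) [^] m" using pow_gen[OF zc nd] by blast
      ultimately have "z = \<one>" by simp
      then show False using z by simp
    qed
  qed
  have sub: "(\<lambda>k. z [^] (k::nat)) ` {..<p} \<subseteq> Z"
  proof
    fix y assume "y \<in> (\<lambda>k. z [^] (k::nat)) ` {..<p}"
    then obtain k where "y = z [^] (k::nat)" by auto
    then have "y = z [^] (int k)" by (simp add: int_pow_int)
    then show "y \<in> Z" using Z_pow[OF z(1)] by simp
  qed
  have "card ((\<lambda>k. z [^] (k::nat)) ` {..<p}) = card Z" using card_image[OF inj] cardZ by simp
  then have "(\<lambda>k. z [^] (k::nat)) ` {..<p} = Z" using card_subset_eq[OF finZ sub] by simp
  then show ?thesis using z by blast
qed

lemma prod_az:
  fixes f :: "'a \<Rightarrow> nat \<times> nat"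
  assumes a: "a \<in> carrier G" and z: "z \<in> Z"
    and zs: "\<forall>g\<in>set zs. g = a [^] fst (f g) \<otimes> z [^] snd (f g)"
  shows "list_prod G zs = a [^] (sum_list (map (fst \<circ> f) zs)) \<otimes> z [^] (sum_list (map (snd \<circ> f) zs))"
  using zs
proof (induction zs)
  case Nil then show ?case using a z Zc by (simp add: list_prod_def)
next
  case (Cons g zs)
  have zc: "z \<in> carrier G" using z Zc by auto
  let ?I = "sum_list (map (fst \<circ> f) zs)" and ?J = "sum_list (map (snd \<circ> f) zs)"
  have zp: "z [^] snd (f g) \<in> Z" using Z_pow[OF z, of "int (snd (f g))"] by (simp add: int_pow_int)
  have IH: "list_prod G zs = a [^] ?I \<otimes> z [^] ?J" using Cons by (simp add: o_def)
  have gg: "g = a [^] fst (f g) \<otimes> z [^] snd (f g)" using Cons.prems by simp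
  have "list_prod G (g # zs) = g \<otimes> list_prod G zs" by (simp add: list_prod_def)
  also have "\<dots> = a [^] fst (f g) \<otimes> z [^] snd (f g) \<otimes> (a [^] ?I \<otimes> z [^] ?J)"
    by (subst IH, subst gg, rule refl)
  also have "\<dots> = a [^] fst (f g) \<otimes> (z [^] snd (f g) \<otimes> (a [^] ?I \<otimes> z [^] ?J))" using a zc by (simp add: m_assoc)
  also have "\<dots> = a [^] fst (f g) \<otimes> (a [^] ?I \<otimes> (z [^] snd (f g) \<otimes> z [^] ?J))"
    using Z_lcomm[OF zp, of "a [^] ?I" "z [^] ?J"] a zc by simp
  also have "\<dots> = a [^] (fst (f g) + ?I) \<otimes> z [^] (snd (f g) + ?J)"
    using a zc by (simp add: m_assoc[symmetric] nat_pow_mult)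
  finally show ?case by (simp add: o_def)
qed

lemma comm_of_commutator:
  assumes g: "g \<in> carrier G" and h: "h \<in> carrier G" and u: "inv g \<otimes> inv h \<otimes> g \<otimes> h = \<one>"
  shows "g \<otimes> h = h \<otimes> g"
proof -
  have "h \<otimes> g \<otimes> (inv g \<otimes> inv h \<otimes> g \<otimes> h) = g \<otimes> h" using g h by (simp add: m_assoc cancel1)
  then show ?thesis using u g h by simp
qed

lemma max_sub:
  assumes M: "maximal_subgroup H G"
  shows "\<exists>a\<in>H. a \<notin> Z \<and> H = AZ a"
proof -
  have subH: "subgroup H G" and Hne: "H \<noteq> carrier G"
    and maxH: "\<And>K. subgroup K G \<Longrightarrow> H \<subseteq> K \<Longrightarrow> K = H \<or> K = carrier G"
    using M unfolding maximal_subgroup_def by auto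
  have Hc: "H \<subseteq> carrier G" using subH subgroup.subset by blast
  obtain z where z: "z \<in> Z" "Z = (\<lambda>k. z [^] (k::nat)) ` {..<p}" using Z_gen by blast
  have zc: "z \<in> carrier G" using z Zc by auto
  have ZH: "Z \<subseteq> H"
  proof (rule ccontr)
    assume nZH: "\<not> Z \<subseteq> H"
    have zH: "z \<notin> H"
    proof
      assume "z \<in> H"
      then have "z [^] (int k) \<in> H" for k using subgroup_int_pow_closed[OF subH] by blast
      then have "Z \<subseteq> H" using z(2) by (auto simp: int_pow_int)
      then show False using nZH by simp
    qed
    have HZc: "\<forall>h1\<in>H. \<forall>h2\<in>H. h1 \<otimes> h2 = h2 \<otimes> h1"
    proof (intro ballI)
      fix h1 h2 assume h: "h1 \<in> H" "h2 \<in> H"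
      have hc: "h1 \<in> carrier G" "h2 \<in> carrier G" using h Hc by auto
      define u where "u = inv h1 \<otimes> inv h2 \<otimes> h1 \<otimes> h2"
      have uZ: "u \<in> Z" unfolding u_def by (rule comm_central[OF hc])
      have uH: "u \<in> H" unfolding u_def using h subH
        by (meson subgroup.m_closed subgroup.m_inv_closed)
      obtain k where k: "k < p" "u = z [^] (k::nat)" using uZ z(2) by auto
      have "k = 0"
      proof (rule ccontr)
        assume "k \<noteq> 0"
        then have nd: "\<not> int p dvd int k" using k(1) by (auto dest: zdvd_imp_le)
        obtain m :: int where "z = (z [^] (int k)) [^] m" using pow_gen[OF zc nd] by blast
        moreover have "(z [^] (int k)) [^] m \<in> H" using uH k(2) subgroup_int_pow_closed[OF subH]
          by (simp add: int_pow_int)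
        ultimately show False using zH by simp
      qed
      then have "u = \<one>" using k by simp
      then show "h1 \<otimes> h2 = h2 \<otimes> h1" using comm_of_commutator[OF hc] by (simp add: u_def)
    qed
    define HZ where "HZ = {h \<otimes> c | h c. h \<in> H \<and> c \<in> Z}"
    have HZsub: "subgroup HZ G"
    proof (rule subgroupI)
      show "HZ \<subseteq> carrier G" using Hc Zc by (auto simp: HZ_def)
      have "\<one> \<otimes> \<one> \<in> HZ" unfolding HZ_def using subgroup.one_closed[OF subH] subgroup.one_closed[OF Z_subgroup] by blast
      then show "HZ \<noteq> {}" by blast
    next
      fix x assume "x \<in> HZ"
      then obtain h c where x: "x = h \<otimes> c" "h \<in> H" "c \<in> Z" by (auto simp: HZ_def)
      have hc: "h \<in> carrier G" "c \<in> carrier G" using x Hc Zc by auto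
      have "inv x = inv c \<otimes> inv h" using x hc by (simp add: inv_mult_group)
      also have "\<dots> = inv h \<otimes> inv c"
        using Z_central[OF subgroup.m_inv_closed[OF Z_subgroup x(3)], of "inv h"] hc by simp
      finally show "inv x \<in> HZ" unfolding HZ_def using x subgroup.m_inv_closed[OF subH] subgroup.m_inv_closed[OF Z_subgroup] by blast
    next
      fix x y assume "x \<in> HZ" "y \<in> HZ"
      then obtain h c h' c' where x: "x = h \<otimes> c" "h \<in> H" "c \<in> Z" and y: "y = h' \<otimes> c'" "h' \<in> H" "c' \<in> Z"
        by (auto simp: HZ_def)
      have hc: "h \<in> carrier G" "c \<in> carrier G" "h' \<in> carrier G" "c' \<in> carrier G" using x y Hc Zc by auto
      have "x \<otimes> y = h \<otimes> (c \<otimes> (h' \<otimes> c'))" using x y hc by (simp add: m_assoc)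
      also have "\<dots> = h \<otimes> (h' \<otimes> (c \<otimes> c'))" using Z_lcomm[OF x(3), of h' c'] hc by simp
      also have "\<dots> = (h \<otimes> h') \<otimes> (c \<otimes> c')" using hc by (simp add: m_assoc)
      finally show "x \<otimes> y \<in> HZ" unfolding HZ_def using x y subgroup.m_closed[OF subH] subgroup.m_closed[OF Z_subgroup] by blast
    qed
    have "H \<subseteq> HZ"
    proof
      fix h assume "h \<in> H"
      then have "h \<otimes> \<one> \<in> HZ" unfolding HZ_def using subgroup.one_closed[OF Z_subgroup] by blast
      then show "h \<in> HZ" using \<open>h \<in> H\<close> Hc by auto
    qed
    moreover have "z \<in> HZ"
    proof -
      have "\<one> \<otimes> z \<in> HZ" unfolding HZ_def using subgroup.one_closed[OF subH] z by blast
      then show ?thesis using zc by simp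
    qed
    ultimately have "HZ = carrier G" using maxH[OF HZsub] zH by blast
    have "\<forall>x\<in>carrier G. \<forall>y\<in>carrier G. x \<otimes> y = y \<otimes> x"
    proof (intro ballI)
      fix x y assume "x \<in> carrier G" "y \<in> carrier G"
      then have "x \<in> HZ" "y \<in> HZ" using \<open>HZ = carrier G\<close> by auto
      then obtain h c h' c' where x: "x = h \<otimes> c" "h \<in> H" "c \<in> Z" and y: "y = h' \<otimes> c'" "h' \<in> H" "c' \<in> Z"
        unfolding HZ_def by blast
      have hc: "h \<in> carrier G" "c \<in> carrier G" "h' \<in> carrier G" "c' \<in> carrier G" using x y Hc Zc by auto
      have "x \<otimes> y = h \<otimes> (h' \<otimes> (c \<otimes> c'))" using x y hc Z_lcomm[OF x(3), of h' c'] by (simp add: m_assoc)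
      also have "\<dots> = h' \<otimes> (h \<otimes> (c' \<otimes> c))"
        using HZc x y hc Z_central[OF x(3) hc(4)] by (simp add: m_assoc[symmetric])
      also have "\<dots> = y \<otimes> x" using x y hc Z_lcomm[OF y(3), of h c] by (simp add: m_assoc)
      finally show "x \<otimes> y = y \<otimes> x" .
    qed
    then show False using ex_noncomm by blast
  qed
  have HneZ: "H \<noteq> Z"
  proof
    assume HZ: "H = Z"
    obtain x where x: "x \<in> carrier G" "x \<notin> Z" using part1_exists by blast
    have "AZ x = H \<or> AZ x = carrier G" using maxH[OF AZ_subgroup[OF x(1)]] Z_AZ[OF x(1)] HZ by simp
    moreover have "AZ x \<noteq> H" using a_AZ[OF x(1)] x HZ by blast
    moreover have "AZ x \<noteq> carrier G"
    proof
      assume "AZ x = carrier G"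
      then have "p ^ 3 \<le> p * p" using AZ_card[OF x(1)] cardZ ordG by (simp add: order_def)
      moreover have "p * p < p ^ 3" using p2 by (simp add: power3_eq_cube)
      ultimately show False by simp
    qed
    ultimately show False by blast
  qed
  obtain a where a: "a \<in> H" "a \<notin> Z" using ZH HneZ by blast
  have ac: "a \<in> carrier G" using a Hc by auto
  have "AZ a \<subseteq> H"
  proof
    fix y assume "y \<in> AZ a"
    then obtain k c where y: "y = a [^] (k::int) \<otimes> c" "c \<in> Z" by (auto simp: AZ_def)
    have "a [^] k \<in> H" using subgroup_int_pow_closed[OF subH a(1)] .
    then show "y \<in> H" using y ZH subgroup.m_closed[OF subH] by blast
  qed
  moreover have "H \<subseteq> AZ a"
  proof
    fix b assume bH: "b \<in> H"
    show "b \<in> AZ a"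
    proof (rule ccontr)
      assume nb: "b \<notin> AZ a"
      have bc: "b \<in> carrier G" using bH Hc by auto
      have "carrier G \<subseteq> H"
      proof
        fix g assume "g \<in> carrier G"
        then obtain i j c where g: "g = a [^] (i::nat) \<otimes> b [^] (j::nat) \<otimes> c" "c \<in> Z"
          using TL_full[OF ac a(2) bc nb] by auto
        have "a [^] (int i) \<in> H" "b [^] (int j) \<in> H"
          using subgroup_int_pow_closed[OF subH] a(1) bH by blast+
        then have "a [^] i \<in> H" "b [^] j \<in> H" by (simp_all add: int_pow_int)
        then show "g \<in> H" using g ZH subgroup.m_closed[OF subH] by blast
      qed
      then show False using Hne Hc by blast
    qed
  qed
  ultimately show ?thesis using a by blast
qed



lemma take_sub: "mset (take n xs) \<subseteq># mset xs"
proof -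
  have "mset xs = mset (take n xs) + mset (drop n xs)" by (metis append_take_drop_id mset_append)
  then show ?thesis by (metis mset_subset_eq_add_left)
qed

lemma part_i:
  assumes ws: "set ws \<subseteq> carrier G" "length ws \<ge> p ^ 3 + 2 * p - 2"
  shows "\<exists>T. T \<subseteq># mset ws \<and> size T = p ^ 3 \<and> has_central_product G T"
proof -
  obtain x y where xy: "x \<in> carrier G" "x \<notin> Z" "y \<in> carrier G" "y \<notin> AZ x" using part1_exists by blast
  define P where "P = (\<lambda>g t. fst t < p \<and> snd t < p \<and> (\<exists>c\<in>Z. g = x [^] fst (t::nat \<times> nat) \<otimes> y [^] snd t \<otimes> c))"
  define f where "f = (\<lambda>g. SOME t. P g t)"
  have f: "fst (f g) < p \<and> snd (f g) < p \<and> (\<exists>c\<in>Z. g = x [^] fst (f g) \<otimes> y [^] snd (f g) \<otimes> c)"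
    if g: "g \<in> carrier G" for g
  proof -
    obtain i j c where "i < p" "j < p" "c \<in> Z" "g = x [^] (i::nat) \<otimes> y [^] (j::nat) \<otimes> c"
      using TL_full[OF xy] g by auto
    then have "P g (i, j)" by (auto simp: P_def)
    then have "P g (f g)" unfolding f_def by (rule someI)
    then show ?thesis by (simp add: P_def)
  qed
  define ws1 where "ws1 = take (p ^ 3 + 2 * p - 2) ws"
  have l1: "length ws1 = p ^ 3 + 2 * p - 2" using ws by (simp add: ws1_def)
  obtain zs where zs: "zs \<in> set (subseqs ws1)" "length zs = p ^ 3"
    "p dvd sum_list (map (fst \<circ> f) zs)" "p dvd sum_list (map (snd \<circ> f) zs)"
    using key2[OF prime_p l1, of "fst \<circ> f" "snd \<circ> f"] by blast
  have sub: "mset zs \<subseteq># mset ws" using subseqs_mset[OF zs(1)] take_sub[of _ ws]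
    unfolding ws1_def by (metis subset_mset.order_trans)
  have zc: "set zs \<subseteq> carrier G" using sub ws(1) by (metis set_mset_mono set_mset_mset subset_trans)
  obtain c where c: "c \<in> Z" "list_prod G zs = x [^] (sum_list (map (fst \<circ> f) zs)) \<otimes> y [^] (sum_list (map (snd \<circ> f) zs)) \<otimes> c"
    using part1_rep[OF xy zc f] by blast
  then have "list_prod G zs = c" using pow_mult_p[OF xy(1) zs(3)] pow_mult_p[OF xy(3) zs(4)] Zc by simp
  then have "has_central_product G (mset zs)" using c(1) unfolding has_central_product_def by blast
  then show ?thesis using sub zs(2) by (metis size_mset)
qed

lemma part_ii:
  assumes ws: "set ws \<subseteq> carrier G" "length ws \<ge> p ^ 3 + p - 1" "set ws \<subseteq> Z"
  shows "\<exists>T. T \<subseteq># mset ws \<and> size T = p ^ 3 \<and> product_one G T"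
proof -
  obtain z where z: "z \<in> Z" "Z = (\<lambda>k. z [^] (k::nat)) ` {..<p}" using Z_gen by blast
  have zc: "z \<in> carrier G" using z Zc by auto
  define f where "f = (\<lambda>g. SOME k. g = z [^] (k::nat))"
  have f: "g = z [^] f g" if gZ: "g \<in> Z" for g
  proof -
    obtain k where "g = z [^] (k::nat)" using gZ z(2) by auto
    then show ?thesis unfolding f_def by (rule someI)
  qed
  define ws1 where "ws1 = take (p ^ 3 + p - 1) ws"
  have l1: "length ws1 = p ^ 3 + p - 1" using ws by (simp add: ws1_def)
  obtain zs where zs: "zs \<in> set (subseqs ws1)" "length zs = p ^ 3" "p dvd sum_list (map f zs)"
    using key1[OF prime_p l1, of f] by blast
  have sub: "mset zs \<subseteq># mset ws" using subseqs_mset[OF zs(1)] take_sub[of _ ws]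
    unfolding ws1_def by (metis subset_mset.order_trans)
  have zZ: "set zs \<subseteq> Z" using sub ws(3) by (metis set_mset_mono set_mset_mset subset_trans)
  define f' where "f' = (\<lambda>g. (f g, 0::nat))"
  have "\<forall>g\<in>set zs. g = z [^] fst (f' g) \<otimes> z [^] snd (f' g)"
    using zZ f zc by (auto simp: f'_def)
  then have "list_prod G zs = z [^] (sum_list (map (fst \<circ> f') zs)) \<otimes> z [^] (sum_list (map (snd \<circ> f') zs))"
    by (rule prod_az[OF zc z(1)])
  also have "sum_list (map (fst \<circ> f') zs) = sum_list (map f zs)" by (simp add: f'_def o_def)
  also have "sum_list (map (snd \<circ> f') zs) = 0" by (simp add: f'_def o_def)
  finally have "list_prod G zs = \<one>" using pow_mult_p[OF zc zs(3)] zc by simp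
  moreover have "mset zs \<noteq> {#}" using zs(2) p2 by auto
  ultimately have "product_one G (mset zs)" unfolding product_one_def by blast
  then show ?thesis using sub zs(2) by (metis size_mset)
qed

lemma part_iii:
  assumes ws: "set ws \<subseteq> carrier G" "length ws \<ge> p ^ 3 + 2 * p - 2" "set ws \<subseteq> H"
    and M: "maximal_subgroup H G"
  shows "\<exists>T. T \<subseteq># mset ws \<and> size T = p ^ 3 \<and> product_one G T"
proof -
  obtain a where a: "a \<in> H" "a \<notin> Z" "H = AZ a" using max_sub[OF M] by blast
  have ac: "a \<in> carrier G" using a AZ_sub by (metis a_AZ subgroup.subset M maximal_subgroup_def subsetD)
  obtain z where z: "z \<in> Z" "Z = (\<lambda>k. z [^] (k::nat)) ` {..<p}" using Z_gen by blast
  have zc: "z \<in> carrier G" using z Zc by auto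
  define f where "f = (\<lambda>g. SOME t. g = a [^] fst (t::nat \<times> nat) \<otimes> z [^] snd t)"
  have f: "g = a [^] fst (f g) \<otimes> z [^] snd (f g)" if gH: "g \<in> H" for g
  proof -
    obtain k c where kc: "g = a [^] (k::int) \<otimes> c" "c \<in> Z" using gH a(3) by (auto simp: AZ_def)
    obtain l where l: "c = z [^] (l::nat)" using kc(2) z(2) by auto
    have "a [^] k = a [^] (k mod int p)" by (rule pow_mod[OF ac])
    also have "k mod int p = int (nat (k mod int p))" using p2 by simp
    finally have "a [^] k = a [^] (nat (k mod int p))" by (simp add: int_pow_int)
    then have "g = a [^] fst (nat (k mod int p), l) \<otimes> z [^] snd (nat (k mod int p), l)" using kc l by simp
    then show ?thesis unfolding f_def by (rule someI)
  qed
  define ws1 where "ws1 = take (p ^ 3 + 2 * p - 2) ws"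
  have l1: "length ws1 = p ^ 3 + 2 * p - 2" using ws by (simp add: ws1_def)
  obtain zs where zs: "zs \<in> set (subseqs ws1)" "length zs = p ^ 3"
    "p dvd sum_list (map (fst \<circ> f) zs)" "p dvd sum_list (map (snd \<circ> f) zs)"
    using key2[OF prime_p l1, of "fst \<circ> f" "snd \<circ> f"] by blast
  have sub: "mset zs \<subseteq># mset ws" using subseqs_mset[OF zs(1)] take_sub[of _ ws]
    unfolding ws1_def by (metis subset_mset.order_trans)
  have zH: "set zs \<subseteq> H" using sub ws(3) by (metis set_mset_mono set_mset_mset subset_trans)
  have "\<forall>g\<in>set zs. g = a [^] fst (f g) \<otimes> z [^] snd (f g)" using zH f by auto
  then have "list_prod G zs = a [^] (sum_list (map (fst \<circ> f) zs)) \<otimes> z [^] (sum_list (map (snd \<circ> f) zs))"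
    by (rule prod_az[OF ac z(1)])
  then have "list_prod G zs = \<one>" using pow_mult_p[OF ac zs(3)] pow_mult_p[OF zc zs(4)] by simp
  moreover have "mset zs \<noteq> {#}" using zs(2) p2 by auto
  ultimately have "product_one G (mset zs)" unfolding product_one_def by blast
  then show ?thesis using sub zs(2) by (metis size_mset)
qed

end

theorem lemma2p9:
  fixes G :: "('a, 'b) monoid_scheme" and p :: nat and W :: "'a multiset"
  assumes "Factorial_Ring.prime p" and "odd p"
    and "group G"
    and "finite (carrier G)"
    and "order G = p ^ 3"
    and "\<forall>x \<in> carrier G. x [^]\<^bsub>G\<^esub> p = \<one>\<^bsub>G\<^esub>"
    and "\<not> comm_group G"
    and "set_mset W \<subseteq> carrier G"
    and "size W = p ^ 3 + 3 * p - 3"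
  shows "(\<exists>T. T \<subseteq># W \<and> size T = p ^ 3 \<and> has_central_product G T)
    \<and> (terms_in W (grp_center G) \<ge> p ^ 3 + p - 1 \<longrightarrow>
         (\<exists>T. T \<subseteq># W \<and> size T = p ^ 3 \<and> product_one G T))
    \<and> ((\<exists>H. maximal_subgroup H G \<and> terms_in W H \<ge> p ^ 3 + 2 * p - 2) \<longrightarrow>
         (\<exists>T. T \<subseteq># W \<and> size T = p ^ 3 \<and> product_one G T))"
proof -
  interpret heis G p
    using assms by (simp add: heis_def heis_axioms_def)
  obtain ws where W: "mset ws = W" using ex_mset by blast
  have wsc: "set ws \<subseteq> carrier G" using assms(8) W by auto
  have lw: "length ws = p ^ 3 + 3 * p - 3" using assms(9) W by auto
  have P1: "\<exists>T. T \<subseteq># W \<and> size T = p ^ 3 \<and> has_central_product G T"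
    using part_i[OF wsc] lw p2 W by simp
  have P2: "terms_in W (grp_center G) \<ge> p ^ 3 + p - 1 \<longrightarrow>
         (\<exists>T. T \<subseteq># W \<and> size T = p ^ 3 \<and> product_one G T)"
  proof
    assume t: "terms_in W (grp_center G) \<ge> p ^ 3 + p - 1"
    define ws2 where "ws2 = filter (\<lambda>x. x \<in> grp_center G) ws"
    have "length ws2 = terms_in W (grp_center G)"
      unfolding ws2_def terms_in_def using W by (metis mset_filter size_mset)
    then have l2: "length ws2 \<ge> p ^ 3 + p - 1" using t by simp
    have s2: "set ws2 \<subseteq> carrier G" "set ws2 \<subseteq> grp_center G" using wsc by (auto simp: ws2_def)
    obtain T where T: "T \<subseteq># mset ws2" "size T = p ^ 3" "product_one G T"
      using part_ii[OF s2(1) l2 s2(2)] by blast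
    have "mset ws2 \<subseteq># W" unfolding ws2_def using W by (simp add: multiset_filter_subset)
    then show "\<exists>T. T \<subseteq># W \<and> size T = p ^ 3 \<and> product_one G T"
      using T subset_mset.order_trans by blast
  qed
  have P3: "(\<exists>H. maximal_subgroup H G \<and> terms_in W H \<ge> p ^ 3 + 2 * p - 2) \<longrightarrow>
         (\<exists>T. T \<subseteq># W \<and> size T = p ^ 3 \<and> product_one G T)"
  proof
    assume "\<exists>H. maximal_subgroup H G \<and> terms_in W H \<ge> p ^ 3 + 2 * p - 2"
    then obtain H where H: "maximal_subgroup H G" "terms_in W H \<ge> p ^ 3 + 2 * p - 2" by blast
    define ws2 where "ws2 = filter (\<lambda>x. x \<in> H) ws"
    have "length ws2 = terms_in W H"
      unfolding ws2_def terms_in_def using W by (metis mset_filter size_mset)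
    then have l2: "length ws2 \<ge> p ^ 3 + 2 * p - 2" using H by simp
    have s2: "set ws2 \<subseteq> carrier G" "set ws2 \<subseteq> H" using wsc by (auto simp: ws2_def)
    obtain T where T: "T \<subseteq># mset ws2" "size T = p ^ 3" "product_one G T"
      using part_iii[OF s2(1) l2 s2(2) H(1)] by blast
    have "mset ws2 \<subseteq># W" unfolding ws2_def using W by (simp add: multiset_filter_subset)
    then show "\<exists>T. T \<subseteq># W \<and> size T = p ^ 3 \<and> product_one G T"
      using T subset_mset.order_trans by blast
  qed
  show ?thesis using P1 P2 P3 by blast
qed

end
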